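(* Let $\{(\mathbf{x}^k,\mathbf{r}^k,\boldsymbol{\lambda}^k)\}$ be generated by Algorithm 1 with $0<\rho\le\frac{\beta}{m}$ and $\mathbf{P}_i\succeq L_i\mathbf{I}+\beta\mathbf{A}_i^\top\mathbf{A}_i$ for all $i$. For $K\ge1$ let $\bar{\mathbf{x}}^{K+1}=\frac{\mathbf{x}^{K+1}+\frac1m\sum_{k=1}^K\mathbf{x}^{k}}{1+K/m}$. Then for every $\mathbf{x}$ with $\mathbf{A}\mathbf{x}=\mathbf{b}$ and every (possibly random, square-integrable) $\boldsymbol{\lambda}\in\mathbb{R}^q$, $$\mathbb{E}\,\Phi(\bar{\mathbf{x}}^{K+1},\mathbf{x},\boldsymbol{\lambda})\le\frac{1}{1+K/m}\Big(C_0(\mathbf{x})+\frac{1}{2m\rho}\mathbb{E}\|\boldsymbol{\lambda}\|^2\Big),$$ where $C_0(\mathbf{x})=(1-\frac1m)[F(\mathbf{x}^0)-F(\mathbf{x})]+\frac12\|\mathbf{x}^0-\mathbf{x}\|_{\mathbf{P}}^2+(\frac{\beta}{2}-\frac{\beta}{m})\|\mathbf{r}^0\|^2$ and $\mathbf{P}=\mathrm{blkdiag}(\mathbf{P}_1,\ldots,\mathbf{P}_m)$.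
   Context: Problem: $\min_{\mathbf{x}} F(\mathbf{x}):=f(\mathbf{x})+g(\mathbf{x})$ s.t. $\mathbf{A}\mathbf{x}=\mathbf{b}$, where $\mathbf{x}=(\mathbf{x}_1;\ldots;\mathbf{x}_m)$ with blocks $\mathbf{x}_i\in\mathbb{R}^{n_i}$, $g(\mathbf{x})=\sum_{i=1}^m g_i(\mathbf{x}_i)$, $\mathbf{A}=[\mathbf{A}_1,\ldots,\mathbf{A}_m]$ with $\mathbf{A}_i\in\mathbb{R}^{q\times n_i}$, $\mathbf{b}\in\mathbb{R}^q$; $f$ is convex and continuously differentiable, each $g_i$ is proper, convex, lower semicontinuous. Define $\Phi(\bar{\mathbf{x}},\mathbf{x},\boldsymbol{\lambda})=F(\bar{\mathbf{x}})-F(\mathbf{x})-\langle\boldsymbol{\lambda},\mathbf{A}\bar{\mathbf{x}}-\mathbf{b}\rangle$. $\mathbf{U}_i\mathbf{y}$ denotes the vector whose $i$-th block is $\mathbf{y}_i$ and other blocks zero; $\|\mathbf{z}\|_{\mathbf{M}}^2=\mathbf{z}^\top\mathbf{M}\mathbf{z}$. Assumption (gradient Lipschitz continuity): there are constants $L_i>0$ and $L_r$ with $\|\nabla_i f(\mathbf{x}+\mathbf{U}_i\mathbf{y})-\nabla_i f(\mathbf{x})\|\le L_i\|\mathbf{y}_i\|$ and $\|\nabla f(\mathbf{x}+\mathbf{U}_i\mathbf{y})-\nabla f(\mathbf{x})\|\le L_r\|\mathbf{y}_i\|$ for all $i,\mathbf{x},\mathbf{y}$. Algorithm 1 (randomized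 primal-dual block update): choose $\mathbf{x}^0$, set $\boldsymbol{\lambda}^0=\mathbf{0}$, $\mathbf{r}^0=\mathbf{A}\mathbf{x}^0-\mathbf{b}$, parameters $\beta>0,\rho>0$, symmetric PSD matrices $\mathbf{P}_i$. For $k=0,1,\ldots$: pick $i_k\in\{1,\ldots,m\}$ uniformly at random, independent of $i_0,\ldots,i_{k-1}$; set $\mathbf{x}_i^{k+1}=\mathbf{x}_i^k$ for $i\ne i_k$ and $$\mathbf{x}_{i_k}^{k+1}\in\arg\min_{\mathbf{x}_{i_k}}\big\langle\nabla_{i_k} f(\mathbf{x}^k)-\mathbf{A}_{i_k}^\top(\boldsymbol{\lambda}^k-\beta\mathbf{r}^k),\mathbf{x}_{i_k}\big\rangle+g_{i_k}(\mathbf{x}_{i_k})+\tfrac12\|\mathbf{x}_{i_k}-\mathbf{x}_{i_k}^k\|_{\mathbf{P}_{i_k}}^2;$$ then $\mathbf{r}^{k+1}=\mathbf{r}^k+\mathbf{A}_{i_k}(\mathbf{x}_{i_k}^{k+1}-\mathbf{x}_{i_k}^k)$ and $\boldsymbol{\lambda}^{k+1}=\boldsymbol{\lambda}^k-\rho\mathbf{r}^{k+1}$. $\mathbb{E}$ is total expectation. *)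

theory Defs
  imports "HOL-Analysis.Analysis" "HOL-Probability.Probability"
begin

text \<open>Block structure: the variable x lives in real^'n; the coordinate j belongs
  to block blk j (blocks are numbered 0..m-1).  U_i y keeps the coordinates of
  block i and zeroes the others.\<close>
definition blockU :: "('n \<Rightarrow> nat) \<Rightarrow> nat \<Rightarrow> real^'n \<Rightarrow> real^'n" where
  "blockU blk i y = (\<chi> j. if blk j = i then y $ j else 0)"

text \<open>g depends only on the coordinates of block i (so it is a function of x_i).\<close>
definition block_fun :: "('n \<Rightarrow> nat) \<Rightarrow> nat \<Rightarrow> (real^'n \<Rightarrow> ereal) \<Rightarrow> bool" where
  "block_fun blk i h \<longleftrightarrow> (\<forall>x y. (\<forall>j. blk j = i \<longrightarrow> x $ j = y $ j) \<longrightarrow> h x = h y)"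

definition proper_fun :: "('a \<Rightarrow> ereal) \<Rightarrow> bool" where
  "proper_fun h \<longleftrightarrow> (\<exists>x. h x < \<infinity>) \<and> (\<forall>x. - \<infinity> < h x)"

definition convex_ereal :: "('a::real_vector \<Rightarrow> ereal) \<Rightarrow> bool" where
  "convex_ereal h \<longleftrightarrow> (\<forall>x y u. 0 \<le> u \<and> u \<le> 1 \<longrightarrow>
      h (u *\<^sub>R x + (1 - u) *\<^sub>R y) \<le> ereal u * h x + ereal (1 - u) * h y)"

definition lsc_ereal :: "('a::topological_space \<Rightarrow> ereal) \<Rightarrow> bool" where
  "lsc_ereal h \<longleftrightarrow> (\<forall>x X. X \<longlonglongrightarrow> x \<longrightarrow> h x \<le> liminf (\<lambda>k. h (X k)))"

definition Fobj :: "(real^'n \<Rightarrow> real) \<Rightarrow> (nat \<Rightarrow> real^'n \<Rightarrow> ereal) \<Rightarrow> nat \<Rightarrow> real^'n \<Rightarrow> ereal" where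
  "Fobj f g m x = ereal (f x) + (\<Sum>i<m. g i x)"

definition Phi :: "(real^'n \<Rightarrow> real) \<Rightarrow> (nat \<Rightarrow> real^'n \<Rightarrow> ereal) \<Rightarrow> nat \<Rightarrow> real^'n^'q \<Rightarrow> real^'q
     \<Rightarrow> real^'n \<Rightarrow> real^'n \<Rightarrow> real^'q \<Rightarrow> ereal" where
  "Phi f g m A b xb x lam = Fobj f g m xb - Fobj f g m x - ereal (lam \<bullet> (A *v xb - b))"

definition eexpectation :: "'w measure \<Rightarrow> ('w \<Rightarrow> ereal) \<Rightarrow> ereal" where
  "eexpectation M X = enn2ereal (\<integral>\<^sup>+ w. e2ennreal (X w) \<partial>M) - enn2ereal (\<integral>\<^sup>+ w. e2ennreal (- X w) \<partial>M)"

end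

theory Submission
  imports Defs
begin



lemma dual_identity:
  fixes r :: "nat \<Rightarrow> 'a::real_inner" and a \<beta> \<rho> :: real
  defines "S \<equiv> \<lambda>k. \<Sum>j\<in>{1..k}. r j"
  shows "(\<Sum>k\<le>K. inner (-(\<rho> *\<^sub>R S k) - \<beta> *\<^sub>R r k) (r (Suc k) - a *\<^sub>R r k)
             - \<beta>/2 * (inner (r (Suc k) - r k) (r (Suc k) - r k)))
    = -\<rho>/2 * inner (S (Suc K)) (S (Suc K)) + a*\<rho>/2 * inner (S K) (S K)
      + \<rho>/2 * (\<Sum>k\<in>{1..Suc K}. inner (r k) (r k)) + a*\<rho>/2 * (\<Sum>k\<in>{1..K}. inner (r k) (r k))
      + (a - 1/2) * \<beta> * inner (r 0) (r 0) + (a - 1) * \<beta> * (\<Sum>k\<in>{1..K}. inner (r k) (r k))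
      - \<beta>/2 * inner (r (Suc K)) (r (Suc K))"
proof (induction K)
  case 0
  have "S 1 = r 1" "S 0 = 0" by (simp_all add: S_def)
  then show ?case by (simp add: inner_simps inner_commute algebra_simps)
next
  case (Suc K)
  have S2: "S (Suc (Suc K)) = S (Suc K) + r (Suc (Suc K))" by (simp add: S_def)
  have S1: "S (Suc K) = S K + r (Suc K)" by (simp add: S_def)
  show ?case
    unfolding sum.atMost_Suc Suc.IH
    by (simp add: S2 S1 inner_simps inner_commute algebra_simps)
qed

lemma dual_ineq:
  fixes r :: "nat \<Rightarrow> 'a::real_inner" and lam :: 'a and \<beta> \<rho> :: real and m :: nat
  assumes m: "m \<ge> 1" and bp: "\<beta> > 0" and rp: "\<rho> > 0" and rl: "\<rho> \<le> \<beta> / real m"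
  shows "(\<Sum>k\<le>K. inner (-(\<rho> *\<^sub>R (\<Sum>j\<in>{1..k}. r j)) - \<beta> *\<^sub>R r k) (r (Suc k) - (1 - 1 / real m) *\<^sub>R r k)
             - \<beta>/2 * (inner (r (Suc k) - r k) (r (Suc k) - r k)))
         - inner lam (r (Suc K) + (1 / real m) *\<^sub>R (\<Sum>j\<in>{1..K}. r j))
    \<le> (\<beta>/2 - \<beta>/real m) * inner (r 0) (r 0) + inner lam lam / (2 * real m * \<rho>)"
proof -
  define a where "a = 1 - 1 / real m"
  define s where "s = (\<Sum>j\<in>{1..K}. r j)"
  define R where "R = r (Suc K)"
  define Q where "Q = (\<Sum>k\<in>{1..K}. inner (r k) (r k))"
  define v where "v = R + (1 / real m) *\<^sub>R s"
  have mpos: "real m > 0" using m by simp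
  have Q0: "Q \<ge> 0" unfolding Q_def by (intro sum_nonneg) simp
  have SS: "(\<Sum>j\<in>{1..Suc K}. r j) = s + R" by (simp add: s_def R_def)
  have QS: "(\<Sum>k\<in>{1..Suc K}. inner (r k) (r k)) = Q + inner R R" by (simp add: Q_def R_def)
  have id: "(\<Sum>k\<le>K. inner (-(\<rho> *\<^sub>R (\<Sum>j\<in>{1..k}. r j)) - \<beta> *\<^sub>R r k) (r (Suc k) - a *\<^sub>R r k)
             - \<beta>/2 * (inner (r (Suc k) - r k) (r (Suc k) - r k)))
    = -\<rho>/2 * inner (s + R) (s + R) + a*\<rho>/2 * inner s s
      + \<rho>/2 * (Q + inner R R) + a*\<rho>/2 * Q
      + (a - 1/2) * \<beta> * inner (r 0) (r 0) + (a - 1) * \<beta> * Q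
      - \<beta>/2 * inner R R"
    using dual_identity[of \<rho> r \<beta> a K] unfolding SS QS s_def[symmetric] Q_def[symmetric] by (simp add: R_def)
  have young: "- inner lam v \<le> inner lam lam / (2 * real m * \<rho>) + (real m * \<rho> / 2) * inner v v"
  proof -
    have "0 \<le> inner (lam + (real m * \<rho>) *\<^sub>R v) (lam + (real m * \<rho>) *\<^sub>R v)" by simp
    hence "0 \<le> inner lam lam + 2 * (real m * \<rho>) * inner lam v + (real m * \<rho>)^2 * inner v v"
      by (simp add: inner_simps inner_commute power2_eq_square algebra_simps)
    hence "0 \<le> (inner lam lam + 2 * (real m * \<rho>) * inner lam v + (real m * \<rho>)^2 * inner v v) / (2 * real m * \<rho>)"
      using mpos rp by simp
    also have "\<dots> = inner lam lam / (2 * real m * \<rho>) + inner lam v + (real m * \<rho> / 2) * inner v v"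
      using mpos rp by (simp add: field_simps power2_eq_square)
    finally show ?thesis by simp
  qed
  have key: "-inner (s + R) (s + R) + inner R R + a * inner s s + real m * inner v v = real m * inner R R"
    unfolding v_def a_def using mpos
    by (simp add: inner_simps inner_commute field_simps power2_eq_square)
  have c1: "real m * \<rho> \<le> \<beta>" using rl mpos by (simp add: field_simps)
  have c2: "\<rho>/2 * (1 + a) + (a - 1) * \<beta> \<le> 0"
  proof -
    have "\<rho>/2 * (1 + a) + (a - 1) * \<beta> = \<rho> * (2 * real m - 1) / (2 * real m) - \<beta> / real m"
      unfolding a_def using mpos by (simp add: field_simps)
    also have "\<dots> \<le> (\<beta> / real m) * (2 * real m - 1) / (2 * real m) - \<beta> / real m"
      using rl mpos m by (intro diff_right_mono divide_right_mono mult_right_mono) auto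
    also have "\<dots> \<le> 0" using mpos bp by (simp add: field_simps)
    finally show ?thesis .
  qed
  have "-\<rho>/2 * inner (s + R) (s + R) + a*\<rho>/2 * inner s s + \<rho>/2 * (Q + inner R R) + a*\<rho>/2 * Q
      + (a - 1) * \<beta> * Q - \<beta>/2 * inner R R + (real m * \<rho> / 2) * inner v v
      = \<rho>/2 * (real m * inner R R) - \<beta>/2 * inner R R + (\<rho>/2 * (1 + a) + (a - 1) * \<beta>) * Q"
  proof -
    have "\<rho>/2 * (-inner (s + R) (s + R) + inner R R + a * inner s s + real m * inner v v) = \<rho>/2 * (real m * inner R R)"
      using key by simp
    thus ?thesis by (simp add: field_simps)
  qed
  also have "\<dots> \<le> 0"
  proof -
    have "\<rho>/2 * (real m * inner R R) - \<beta>/2 * inner R R = (real m * \<rho> - \<beta>)/2 * inner R R" by (simp add: algebra_simps)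
    also have "\<dots> \<le> 0" using c1 by (intro mult_nonpos_nonneg) auto
    finally show ?thesis using c2 Q0 mult_nonpos_nonneg by fastforce
  qed
  finally have main: "-\<rho>/2 * inner (s + R) (s + R) + a*\<rho>/2 * inner s s + \<rho>/2 * (Q + inner R R) + a*\<rho>/2 * Q
      + (a - 1) * \<beta> * Q - \<beta>/2 * inner R R + (real m * \<rho> / 2) * inner v v \<le> 0" .
  have hX: "(a - 1/2) * \<beta> * inner (r 0) (r 0) = (\<beta>/2 - \<beta>/real m) * inner (r 0) (r 0)"
    unfolding a_def by (simp add: algebra_simps)
  have id2: "(\<Sum>k\<le>K. inner (-(\<rho> *\<^sub>R (\<Sum>j\<in>{1..k}. r j)) - \<beta> *\<^sub>R r k) (r (Suc k) - (1 - 1 / real m) *\<^sub>R r k)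
             - \<beta>/2 * (inner (r (Suc k) - r k) (r (Suc k) - r k)))
         - inner lam (r (Suc K) + (1 / real m) *\<^sub>R (\<Sum>j\<in>{1..K}. r j))
     = (-\<rho>/2 * inner (s + R) (s + R) + a*\<rho>/2 * inner s s
      + \<rho>/2 * (Q + inner R R) + a*\<rho>/2 * Q
      + (a - 1/2) * \<beta> * inner (r 0) (r 0) + (a - 1) * \<beta> * Q
      - \<beta>/2 * inner R R) - inner lam v"
    using id unfolding a_def s_def R_def v_def by simp
  show ?thesis using id2 main young hX by linarith
qed



lemma blockU_nth: "blockU blk i y $ j = (if blk j = i then y $ j else 0)"
  by (simp add: blockU_def)

lemma blockU_idem[simp]: "blockU blk i (blockU blk i y) = blockU blk i y"
  by (simp add: blockU_def vec_eq_iff)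

lemma blockU_add: "blockU blk i (u + v) = blockU blk i u + blockU blk i v"
  by (simp add: blockU_def vec_eq_iff)

lemma blockU_diff: "blockU blk i (u - v) = blockU blk i u - blockU blk i v"
  by (simp add: blockU_def vec_eq_iff)

lemma blockU_scale: "blockU blk i (t *\<^sub>R u) = t *\<^sub>R blockU blk i u"
  by (simp add: blockU_def vec_eq_iff)

lemma blockU_inner: "inner (blockU blk i u) v = inner u (blockU blk i v)"
  unfolding inner_vec_def by (intro sum.cong) (auto simp: blockU_def)

lemma blockU_sum:
  assumes "\<forall>j. blk j < m"
  shows "(\<Sum>i<m. blockU blk i y) = y"
proof -
  have "(\<Sum>i<m. blockU blk i y) $ j = y $ j" for j
  proof -
    have "(\<Sum>i<m. blockU blk i y) $ j = (\<Sum>i<m. (if blk j = i then y $ j else 0))"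
      by (simp add: sum_component blockU_def)
    also have "\<dots> = y $ j" using assms by (simp add: sum.delta)
    finally show ?thesis .
  qed
  thus ?thesis by (simp add: vec_eq_iff)
qed

lemma descent:
  fixes f :: "real^'n \<Rightarrow> real" and gradf :: "real^'n \<Rightarrow> real^'n"
  assumes f_grad: "\<forall>z. (f has_derivative (\<lambda>h. gradf z \<bullet> h)) (at z)"
    and Lip: "\<forall>z y. norm (blockU blk i (gradf (z + blockU blk i y) - gradf z)) \<le> L * norm (blockU blk i y)"
    and d: "blockU blk i d = d"
  shows "f (xk + d) \<le> f xk + gradf xk \<bullet> d + L/2 * (norm d)^2"
proof -
  define \<phi> where "\<phi> t = f (xk + t *\<^sub>R d) - t * (gradf xk \<bullet> d) - L/2 * t^2 * (norm d)^2" for t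
  have D1: "((\<lambda>t. f (xk + t *\<^sub>R d)) has_real_derivative (gradf (xk + t *\<^sub>R d) \<bullet> d)) (at t)" for t
  proof -
    have l: "((\<lambda>t. xk + t *\<^sub>R d) has_derivative (\<lambda>h. h *\<^sub>R d)) (at t)"
      by (auto intro!: derivative_eq_intros)
    have "((\<lambda>t. f (xk + t *\<^sub>R d)) has_derivative (\<lambda>h. gradf (xk + t *\<^sub>R d) \<bullet> (h *\<^sub>R d))) (at t)"
      using has_derivative_compose[OF l f_grad[rule_format]] by simp
    moreover have "(\<lambda>h. gradf (xk + t *\<^sub>R d) \<bullet> (h *\<^sub>R d)) = (*) (gradf (xk + t *\<^sub>R d) \<bullet> d)"
      by (auto simp: mult.commute)
    ultimately show ?thesis by (simp add: has_field_derivative_def)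
  qed
  have D: "(\<phi> has_real_derivative (gradf (xk + t *\<^sub>R d) \<bullet> d - gradf xk \<bullet> d - L * t * (norm d)^2)) (at t)" for t
    unfolding \<phi>_def by (rule derivative_eq_intros D1 refl | simp)+
  have neg: "gradf (xk + t *\<^sub>R d) \<bullet> d - gradf xk \<bullet> d - L * t * (norm d)^2 \<le> 0" if t: "0 \<le> t" for t
  proof -
    have "gradf (xk + t *\<^sub>R d) \<bullet> d - gradf xk \<bullet> d = (gradf (xk + t *\<^sub>R d) - gradf xk) \<bullet> blockU blk i d"
      using d by (simp add: inner_diff_left)
    also have "\<dots> = blockU blk i (gradf (xk + blockU blk i (t *\<^sub>R d)) - gradf xk) \<bullet> d"
      using d by (simp add: blockU_inner blockU_scale)
    also have "\<dots> \<le> norm (blockU blk i (gradf (xk + blockU blk i (t *\<^sub>R d)) - gradf xk)) * norm d"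
      by (rule norm_cauchy_schwarz)
    also have "\<dots> \<le> L * norm (blockU blk i (t *\<^sub>R d)) * norm d"
      using Lip by (intro mult_right_mono) auto
    also have "\<dots> = L * t * (norm d)^2" using d t by (simp add: blockU_scale power2_eq_square)
    finally show ?thesis by simp
  qed
  have "\<phi> 1 \<le> \<phi> 0"
  proof (rule DERIV_nonpos_imp_nonincreasing[of 0 1])
    fix t :: real assume "0 \<le> t" "t \<le> 1"
    thus "\<exists>y. (\<phi> has_real_derivative y) (at t) \<and> y \<le> 0"
      using D[of t] neg[of t] by blast
  qed simp
  thus ?thesis by (simp add: \<phi>_def)
qed

lemma convex_grad:
  fixes f :: "real^'n \<Rightarrow> real" and gradf :: "real^'n \<Rightarrow> real^'n"
  assumes f_convex: "convex_on UNIV f"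
    and f_grad: "\<forall>z. (f has_derivative (\<lambda>h. gradf z \<bullet> h)) (at z)"
  shows "f y \<ge> f x + gradf x \<bullet> (y - x)"
proof -
  define \<psi> where "\<psi> t = f (x + t *\<^sub>R (y - x))" for t
  have cv: "convex_on UNIV \<psi>"
  proof (rule convex_onI)
    fix s t u :: real assume u: "0 < u" "u < 1"
    have "\<psi> ((1 - u) *\<^sub>R s + u *\<^sub>R t) = f ((1 - u) *\<^sub>R (x + s *\<^sub>R (y - x)) + u *\<^sub>R (x + t *\<^sub>R (y - x)))"
      unfolding \<psi>_def by (simp add: algebra_simps)
    also have "\<dots> \<le> (1 - u) * f (x + s *\<^sub>R (y - x)) + u * f (x + t *\<^sub>R (y - x))"
      using f_convex u by (intro convex_onD) auto
    finally show "\<psi> ((1 - u) *\<^sub>R s + u *\<^sub>R t) \<le> (1 - u) * \<psi> s + u * \<psi> t" by (simp add: \<psi>_def)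
  qed simp
  have l: "((\<lambda>t. x + t *\<^sub>R (y - x)) has_derivative (\<lambda>h. h *\<^sub>R (y - x))) (at 0)"
    by (auto intro!: derivative_eq_intros)
  have "(\<psi> has_derivative (\<lambda>h. gradf x \<bullet> (h *\<^sub>R (y - x)))) (at 0)"
    using has_derivative_compose[OF l f_grad[rule_format]] by (simp add: \<psi>_def[abs_def])
  moreover have "(\<lambda>h. gradf x \<bullet> (h *\<^sub>R (y - x))) = (*) (gradf x \<bullet> (y - x))"
    by (auto simp: mult.commute)
  ultimately have "(\<psi> has_real_derivative (gradf x \<bullet> (y - x))) (at 0 within UNIV)"
    by (simp add: has_field_derivative_def)
  from convex_on_imp_above_tangent[OF cv _ _ _ this, of 1]
  show ?thesis by (simp add: \<psi>_def)
qed

lemma quad_combo: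
  fixes Pm :: "real^'n^'n" and a b :: "real^'n"
  shows "(t *\<^sub>R a + (1-t) *\<^sub>R b) \<bullet> (Pm *v (t *\<^sub>R a + (1-t) *\<^sub>R b))
     = t * (a \<bullet> (Pm *v a)) + (1-t) * (b \<bullet> (Pm *v b)) - t * (1-t) * ((a - b) \<bullet> (Pm *v (a - b)))"
  by (simp add: algebra_simps inner_simps power2_eq_square)

lemma prox_ineq:
  fixes h :: "real^'n \<Rightarrow> ereal" and Pm :: "real^'n^'n" and y z xk :: "real^'n"
  assumes noninf: "\<forall>v. -\<infinity> < h v" and hz: "h z < \<infinity>"
    and conv: "\<forall>t. 0<t \<and> t<1 \<longrightarrow> h (t *\<^sub>R z + (1-t) *\<^sub>R y) \<le> ereal t * h z + ereal (1-t) * h y"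
    and min: "\<forall>t. 0<t \<and> t\<le>1 \<longrightarrow> h y + ereal ((y - xk) \<bullet> (Pm *v (y - xk))/2)
        \<le> h (t *\<^sub>R z + (1-t) *\<^sub>R y) + ereal ((t *\<^sub>R z + (1-t) *\<^sub>R y - xk) \<bullet> (Pm *v (t *\<^sub>R z + (1-t) *\<^sub>R y - xk))/2)"
    and psd: "\<forall>v. 0 \<le> v \<bullet> (Pm *v v)"
  shows "h y < \<infinity>"
    and "real_of_ereal (h y) + (y - xk) \<bullet> (Pm *v (y - xk))/2 + (z - y) \<bullet> (Pm *v (z - y))/2
         \<le> real_of_ereal (h z) + (z - xk) \<bullet> (Pm *v (z - xk))/2"
proof -
  define q where "q v = v \<bullet> (Pm *v v)" for v
  have m1: "h y + ereal (q (y - xk)/2) \<le> h z + ereal (q (z - xk)/2)"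
    using min[rule_format, of 1] by (simp add: q_def)
  show hy: "h y < \<infinity>"
  proof (rule ccontr)
    assume "\<not> h y < \<infinity>" hence "h y = \<infinity>" by simp
    with m1 hz show False by auto
  qed
  obtain Hy where Hy: "h y = ereal Hy" using hy noninf[rule_format, of y] by (cases "h y") auto
  obtain Hz where Hz: "h z = ereal Hz" using hz noninf[rule_format, of z] by (cases "h z") auto
  define a where "a = z - xk"
  define b where "b = y - xk"
  have ab: "a - b = z - y" by (simp add: a_def b_def)
  have step: "Hy + q b/2 + (1-t) * q (z - y)/2 \<le> Hz + q a/2" if t: "0 < t" "t < 1" for t
  proof -
    have c: "t *\<^sub>R z + (1-t) *\<^sub>R y - xk = t *\<^sub>R a + (1-t) *\<^sub>R b"
      by (simp add: a_def b_def algebra_simps)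
    have "ereal (Hy + q b/2) = h y + ereal (q (y - xk)/2)" by (simp add: Hy b_def)
    also have "\<dots> \<le> h (t *\<^sub>R z + (1-t) *\<^sub>R y) + ereal (q (t *\<^sub>R a + (1-t) *\<^sub>R b)/2)"
      using min[rule_format, of t] t c by (simp add: q_def)
    also have "\<dots> \<le> ereal t * h z + ereal (1-t) * h y + ereal (q (t *\<^sub>R a + (1-t) *\<^sub>R b)/2)"
      using conv[rule_format, of t] t by (intro add_right_mono) auto
    also have "\<dots> = ereal (t * Hz + (1-t) * Hy + q (t *\<^sub>R a + (1-t) *\<^sub>R b)/2)"
      by (simp add: Hy Hz)
    finally have "Hy + q b/2 \<le> t * Hz + (1-t) * Hy + q (t *\<^sub>R a + (1-t) *\<^sub>R b)/2" by simp
    also have "q (t *\<^sub>R a + (1-t) *\<^sub>R b) = t * q a + (1-t) * q b - t * (1-t) * q (z - y)"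
      unfolding q_def quad_combo ab[symmetric] by simp
    finally have "t * (Hy + q b/2 + (1-t) * q (z - y)/2) \<le> t * (Hz + q a/2)"
      by (simp add: field_simps)
    thus ?thesis using t by simp
  qed
  have qzy: "q (z - y) \<ge> 0" using psd by (simp add: q_def)
  have "Hy + q b/2 + q (z - y)/2 \<le> Hz + q a/2"
  proof (rule ccontr)
    assume "\<not> ?thesis"
    hence D: "Hy + q b/2 + q (z - y)/2 - (Hz + q a/2) > 0" by simp
    define D' where "D' = Hy + q b/2 + q (z - y)/2 - (Hz + q a/2)"
    define t where "t = min (1/2) (D' / (q (z - y) + 1))"
    have tpos: "0 < t" using D qzy by (simp add: t_def D'_def)
    have tl: "t < 1" by (simp add: t_def)
    have "t * q (z - y) < D'"
    proof -
      have "t * q (z - y) \<le> (D' / (q (z - y) + 1)) * q (z - y)"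
        using qzy by (intro mult_right_mono) (auto simp: t_def)
      also have "\<dots> < D'" using D qzy unfolding D'_def[symmetric]
        by (simp add: field_simps)
      finally show ?thesis .
    qed
    moreover have "t * q (z - y) \<ge> 0" using tpos qzy by simp
    moreover have "D' \<le> t * q (z - y) / 2"
      using step[OF tpos tl] unfolding D'_def by (simp add: field_simps)
    ultimately show False by linarith
  qed
  thus "real_of_ereal (h y) + (y - xk) \<bullet> (Pm *v (y - xk))/2 + (z - y) \<bullet> (Pm *v (z - y))/2
         \<le> real_of_ereal (h z) + (z - xk) \<bullet> (Pm *v (z - xk))/2"
    by (simp add: Hy Hz q_def a_def b_def)
qed

lemma blockdiag_cross:
  fixes P :: "real^'n^'n"
  assumes P_blkdiag: "\<forall>j l. blk j \<noteq> blk l \<longrightarrow> P $ j $ l = 0"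
  shows "blockU blk i u \<bullet> (P *v (v - blockU blk i v)) = 0"
proof -
  have "blockU blk i u \<bullet> (P *v (v - blockU blk i v)) =
     (\<Sum>j\<in>UNIV. (if blk j = i then u $ j else 0) * (\<Sum>l\<in>UNIV. P $ j $ l * (if blk l = i then 0 else v $ l)))"
    unfolding inner_vec_def matrix_vector_mult_def by (auto simp: blockU_def intro!: sum.cong)
  also have "\<dots> = 0"
  proof (intro sum.neutral ballI)
    fix j assume "j \<in> (UNIV::'n set)"
    show "(if blk j = i then u $ j else 0) * (\<Sum>l\<in>UNIV. P $ j $ l * (if blk l = i then 0 else v $ l)) = 0"
    proof (cases "blk j = i")
      case True
      have "(\<Sum>l\<in>UNIV. P $ j $ l * (if blk l = i then 0 else v $ l)) = 0"
        using True P_blkdiag by (intro sum.neutral) auto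
      thus ?thesis by simp
    qed simp
  qed
  finally show ?thesis .
qed

lemma blockdiag_split:
  fixes P :: "real^'n^'n"
  assumes P_blkdiag: "\<forall>j l. blk j \<noteq> blk l \<longrightarrow> P $ j $ l = 0"
  shows "y \<bullet> (P *v y) = blockU blk i y \<bullet> (P *v blockU blk i y)
           + (y - blockU blk i y) \<bullet> (P *v (y - blockU blk i y))"
proof -
  define u where "u = blockU blk i y"
  define v where "v = y - blockU blk i y"
  have y: "y = u + v" by (simp add: u_def v_def)
  have c1: "u \<bullet> (P *v v) = 0" unfolding u_def v_def by (rule blockdiag_cross[OF P_blkdiag])
  have c2: "v \<bullet> (P *v u) = 0"
  proof -
    have P_blk': "\<forall>j l. blk j \<noteq> blk l \<longrightarrow> (transpose P) $ j $ l = 0"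
      using P_blkdiag by (simp add: transpose_def)
    have "v \<bullet> (P *v u) = u \<bullet> (transpose P *v v)"
      by (simp add: dot_lmul_matrix[symmetric] vector_transpose_matrix inner_commute)
    also have "\<dots> = 0" unfolding u_def v_def by (rule blockdiag_cross[OF P_blk'])
    finally show ?thesis .
  qed
  have "y \<bullet> (P *v y) = (u + v) \<bullet> (P *v (u + v))" using y by simp
  also have "\<dots> = u \<bullet> (P *v u) + v \<bullet> (P *v v)"
    using c1 c2 by (simp add: algebra_simps inner_simps)
  finally show ?thesis unfolding u_def v_def .
qed

lemma convex_ereal_domain:
  fixes h :: "'a::real_vector \<Rightarrow> ereal"
  assumes cv: "convex_ereal h" and ni: "\<forall>v. -\<infinity> < h v"
  shows "convex {v. h v < \<infinity>}" and "convex_on {v. h v < \<infinity>} (\<lambda>v. real_of_ereal (h v))"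
proof -
  have main: "h ((1 - t) *\<^sub>R x + t *\<^sub>R y) \<le> ereal ((1 - t) * real_of_ereal (h x) + t * real_of_ereal (h y))"
    if tt: "0 \<le> t" "t \<le> 1" and hx: "h x < \<infinity>" and hy: "h y < \<infinity>" for t x y
  proof -
    obtain a where a: "h x = ereal a" using hx ni[rule_format, of x] by (cases "h x") auto
    obtain b where b: "h y = ereal b" using hy ni[rule_format, of y] by (cases "h y") auto
    have "h ((1 - t) *\<^sub>R x + t *\<^sub>R y) = h (t *\<^sub>R y + (1 - t) *\<^sub>R x)" by (simp add: add.commute)
    also have "\<dots> \<le> ereal t * h y + ereal (1 - t) * h x"
      using cv tt unfolding convex_ereal_def by blast
    also have "\<dots> = ereal ((1 - t) * real_of_ereal (h x) + t * real_of_ereal (h y))" by (simp add: a b)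
    finally show ?thesis .
  qed
  show "convex {v. h v < \<infinity>}"
    unfolding convex_alt
  proof (intro ballI allI impI)
    fix x y and u :: real assume "x \<in> {v. h v < \<infinity>}" "y \<in> {v. h v < \<infinity>}" "0 \<le> u \<and> u \<le> 1"
    with main[of u x y] show "(1 - u) *\<^sub>R x + u *\<^sub>R y \<in> {v. h v < \<infinity>}"
      by (auto intro: le_less_trans)
  qed
  then show "convex_on {v. h v < \<infinity>} (\<lambda>v. real_of_ereal (h v))"
  proof (intro convex_onI)
    fix x y and t :: real assume "0 < t" "t < 1" "x \<in> {v. h v < \<infinity>}" "y \<in> {v. h v < \<infinity>}"
    with main[of t x y] ni show "real_of_ereal (h ((1 - t) *\<^sub>R x + t *\<^sub>R y))
      \<le> (1 - t) * real_of_ereal (h x) + t * real_of_ereal (h y)"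
      by (cases "h ((1 - t) *\<^sub>R x + t *\<^sub>R y)") auto
  qed
qed




lemma step_ineq:
  fixes m :: nat and blk :: "'n::finite \<Rightarrow> nat"
    and f :: "real^'n \<Rightarrow> real" and gradf :: "real^'n \<Rightarrow> real^'n"
    and g :: "nat \<Rightarrow> real^'n \<Rightarrow> ereal"
    and A :: "real^'n^'q::finite" and b :: "real^'q"
    and P :: "real^'n^'n" and \<beta> Li :: real and i :: nat
    and xk xk1 x :: "real^'n" and lamk rk :: "real^'q"
  assumes f_grad: "\<forall>z. (f has_derivative (\<lambda>h. gradf z \<bullet> h)) (at z)"
    and i: "i < m"
    and g_block: "\<forall>i<m. block_fun blk i (g i)"
    and g_proper: "\<forall>i<m. proper_fun (g i)"
    and g_convex: "\<forall>i<m. convex_ereal (g i)"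
    and Lip: "\<forall>z y. norm (blockU blk i (gradf (z + blockU blk i y) - gradf z)) \<le> Li * norm (blockU blk i y)"
    and P_blkdiag: "\<forall>j l. blk j \<noteq> blk l \<longrightarrow> P $ j $ l = 0"
    and P_psd: "\<forall>v. 0 \<le> v \<bullet> (P *v v)"
    and P_bound: "\<forall>v. v = blockU blk i v \<longrightarrow> Li * (norm v)\<^sup>2 + \<beta> * (norm (A *v v))\<^sup>2 \<le> v \<bullet> (P *v v)"
    and keep: "\<forall>j. blk j \<noteq> i \<longrightarrow> xk1 $ j = xk $ j"
    and argmin: "\<forall>z. (\<forall>j. blk j \<noteq> i \<longrightarrow> z $ j = xk $ j) \<longrightarrow>
        ereal (blockU blk i (gradf xk - transpose A *v (lamk - \<beta> *\<^sub>R rk)) \<bullet> xk1)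
          + g i xk1
          + ereal ((1/2) * ((xk1 - xk) \<bullet> (P *v (xk1 - xk))))
        \<le> ereal (blockU blk i (gradf xk - transpose A *v (lamk - \<beta> *\<^sub>R rk)) \<bullet> z)
          + g i z
          + ereal ((1/2) * ((z - xk) \<bullet> (P *v (z - xk))))"
    and x_fin: "\<forall>j<m. \<bar>g j x\<bar> \<noteq> \<infinity>"
  shows "g i xk1 < \<infinity>"
    and "(f xk1 + (\<Sum>j<m. real_of_ereal (g j xk1))) - (f x + (\<Sum>j<m. real_of_ereal (g j x)))
      \<le> f xk - f x
        + ((\<Sum>j\<in>{..<m}-{i}. real_of_ereal (g j xk) - real_of_ereal (g j x))
           + blockU blk i (gradf xk) \<bullet> (x - xk)
           + (lamk - \<beta> *\<^sub>R rk) \<bullet> (A *v blockU blk i (xk - x)))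
        + (lamk - \<beta> *\<^sub>R rk) \<bullet> (A *v (xk1 - xk))
        + (1/2) * ((x - xk) \<bullet> (P *v (x - xk))) - (1/2) * ((x - xk1) \<bullet> (P *v (x - xk1)))
        - \<beta>/2 * (norm (A *v (xk1 - xk)))\<^sup>2"
proof -
  define c where "c = blockU blk i (gradf xk - transpose A *v (lamk - \<beta> *\<^sub>R rk))"
  define \<mu> where "\<mu> = lamk - \<beta> *\<^sub>R rk"
  define q where "q v = v \<bullet> (P *v v)" for v
  define d where "d = xk1 - xk"
  define z where "z = xk + blockU blk i (x - xk)"
  define h where "h v = ereal (c \<bullet> v) + g i v" for v
  have dU: "blockU blk i d = d" using keep by (auto simp: d_def blockU_def vec_eq_iff)
  have xk1: "xk1 = xk + d" by (simp add: d_def)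
  have z_adm: "\<forall>j. blk j \<noteq> i \<longrightarrow> z $ j = xk $ j" by (simp add: z_def blockU_def)
  have gz: "g i z = g i x"
    using g_block i unfolding block_fun_def by (auto simp: z_def blockU_def)
  have gni: "\<forall>v. -\<infinity> < g i v" using g_proper i unfolding proper_fun_def by auto
  have hni: "\<forall>v. -\<infinity> < h v" using gni by (simp add: h_def)
  have gxfin: "\<bar>g i x\<bar> \<noteq> \<infinity>" using x_fin i by auto
  have hz: "h z < \<infinity>" using gxfin gz unfolding h_def by (cases "g i x") auto
  have conv: "\<forall>t. 0<t \<and> t<1 \<longrightarrow> h (t *\<^sub>R z + (1-t) *\<^sub>R xk1) \<le> ereal t * h z + ereal (1-t) * h xk1"
  proof (intro allI impI)
    fix t :: real assume t: "0 < t \<and> t < 1"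
    have "g i (t *\<^sub>R z + (1-t) *\<^sub>R xk1) \<le> ereal t * g i z + ereal (1-t) * g i xk1"
      using g_convex i t unfolding convex_ereal_def by auto
    moreover have "c \<bullet> (t *\<^sub>R z + (1-t) *\<^sub>R xk1) = t * (c \<bullet> z) + (1-t) * (c \<bullet> xk1)"
      by (simp add: inner_simps)
    ultimately have "h (t *\<^sub>R z + (1-t) *\<^sub>R xk1) \<le> ereal (t * (c \<bullet> z) + (1-t) * (c \<bullet> xk1)) + (ereal t * g i z + ereal (1-t) * g i xk1)"
      unfolding h_def by (metis add_left_mono)
    also have "\<dots> = ereal t * h z + ereal (1-t) * h xk1"
      using gni t unfolding h_def
      by (cases "g i z"; cases "g i xk1") (auto simp: algebra_simps)
    finally show "h (t *\<^sub>R z + (1-t) *\<^sub>R xk1) \<le> ereal t * h z + ereal (1-t) * h xk1" .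
  qed
  have mn: "\<forall>t. 0<t \<and> t\<le>1 \<longrightarrow> h xk1 + ereal ((xk1 - xk) \<bullet> (P *v (xk1 - xk))/2)
        \<le> h (t *\<^sub>R z + (1-t) *\<^sub>R xk1) + ereal ((t *\<^sub>R z + (1-t) *\<^sub>R xk1 - xk) \<bullet> (P *v (t *\<^sub>R z + (1-t) *\<^sub>R xk1 - xk))/2)"
  proof (intro allI impI)
    fix t :: real assume t: "0 < t \<and> t \<le> 1"
    have adm: "\<forall>j. blk j \<noteq> i \<longrightarrow> (t *\<^sub>R z + (1-t) *\<^sub>R xk1) $ j = xk $ j"
      using z_adm keep by (auto simp: algebra_simps)
    from argmin[rule_format, of "t *\<^sub>R z + (1-t) *\<^sub>R xk1"] adm show "h xk1 + ereal ((xk1 - xk) \<bullet> (P *v (xk1 - xk))/2)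
        \<le> h (t *\<^sub>R z + (1-t) *\<^sub>R xk1) + ereal ((t *\<^sub>R z + (1-t) *\<^sub>R xk1 - xk) \<bullet> (P *v (t *\<^sub>R z + (1-t) *\<^sub>R xk1 - xk))/2)"
      unfolding h_def c_def[symmetric] by (simp add: add.assoc)
  qed
  note pr = prox_ineq[of h z xk1 xk P, OF hni hz conv mn P_psd]
  from pr(1) have g1: "g i xk1 < \<infinity>" by (simp add: h_def)
  thus "g i xk1 < \<infinity>" .
  have gxk1fin: "\<bar>g i xk1\<bar> \<noteq> \<infinity>" using g1 gni by auto
  have hre: "real_of_ereal (h v) = c \<bullet> v + real_of_ereal (g i v)" if "\<bar>g i v\<bar> \<noteq> \<infinity>" for v
    using that unfolding h_def by (cases "g i v") auto
  have P1: "c \<bullet> xk1 + real_of_ereal (g i xk1) + q d/2 + q (z - xk1)/2 \<le> c \<bullet> z + real_of_ereal (g i x) + q (z - xk)/2"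
    using pr(2) hre[OF gxk1fin] hre[of z] gz gxfin by (simp add: q_def d_def)
  have zk: "z - xk = blockU blk i (x - xk)" by (simp add: z_def)
  have zk1: "z - xk1 = blockU blk i (x - xk1)"
    using dU by (simp add: z_def xk1 blockU_diff blockU_add algebra_simps)
  have rest: "(x - xk1) - blockU blk i (x - xk1) = (x - xk) - blockU blk i (x - xk)"
    using dU by (simp add: xk1 blockU_diff blockU_add algebra_simps)
  have qsplit: "q (x - xk) - q (x - xk1) = q (z - xk) - q (z - xk1)"
    using blockdiag_split[OF P_blkdiag, of "x - xk" i] blockdiag_split[OF P_blkdiag, of "x - xk1" i]
    unfolding q_def zk zk1 rest by simp
  have cz: "c \<bullet> z - c \<bullet> xk1 = blockU blk i (gradf xk) \<bullet> (x - xk) - gradf xk \<bullet> d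
      + \<mu> \<bullet> (A *v d) + \<mu> \<bullet> (A *v blockU blk i (xk - x))"
  proof -
    have "c \<bullet> z - c \<bullet> xk1 = c \<bullet> blockU blk i (x - xk1)" using zk1 by (simp add: inner_diff_right[symmetric])
    also have "\<dots> = (gradf xk - transpose A *v \<mu>) \<bullet> blockU blk i (x - xk1)"
      unfolding c_def \<mu>_def by (simp add: blockU_inner)
    also have "\<dots> = gradf xk \<bullet> blockU blk i (x - xk1) - \<mu> \<bullet> (A *v blockU blk i (x - xk1))"
      by (simp add: inner_diff_left dot_lmul_matrix)
    also have "blockU blk i (x - xk1) = blockU blk i (x - xk) - d"
      using dU by (simp add: xk1 blockU_diff blockU_add)
    also have "gradf xk \<bullet> (blockU blk i (x - xk) - d) - \<mu> \<bullet> (A *v (blockU blk i (x - xk) - d))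
        = blockU blk i (gradf xk) \<bullet> (x - xk) - gradf xk \<bullet> d + \<mu> \<bullet> (A *v d) + \<mu> \<bullet> (A *v blockU blk i (xk - x))"
    proof -
      have "A *v blockU blk i (xk - x) = - (A *v blockU blk i (x - xk))"
        by (metis blockU_diff matrix_vector_mult_diff_distrib minus_diff_eq)
      thus ?thesis by (simp add: inner_diff_right blockU_inner blockU_diff algebra_simps inner_simps)
    qed
    finally show ?thesis .
  qed
  have desc: "f xk1 \<le> f xk + gradf xk \<bullet> d + Li/2 * (norm d)^2"
    using descent[OF f_grad Lip dU] by (simp add: xk1)
  have pb: "Li * (norm d)\<^sup>2 + \<beta> * (norm (A *v d))\<^sup>2 \<le> q d"
    using P_bound dU by (simp add: q_def)
  have gsum: "(\<Sum>j<m. real_of_ereal (g j v)) = real_of_ereal (g i v) + (\<Sum>j\<in>{..<m}-{i}. real_of_ereal (g j v))" for v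
    using i by (simp add: sum.remove[of "{..<m}" i])
  have geq: "(\<Sum>j\<in>{..<m}-{i}. real_of_ereal (g j xk1)) = (\<Sum>j\<in>{..<m}-{i}. real_of_ereal (g j xk))"
  proof (intro sum.cong refl)
    fix j assume j: "j \<in> {..<m}-{i}"
    have "g j xk1 = g j xk" using g_block j keep unfolding block_fun_def by auto
    thus "real_of_ereal (g j xk1) = real_of_ereal (g j xk)" by simp
  qed
  have sdiff: "(\<Sum>j\<in>{..<m}-{i}. real_of_ereal (g j xk) - real_of_ereal (g j x))
     = (\<Sum>j\<in>{..<m}-{i}. real_of_ereal (g j xk)) - (\<Sum>j\<in>{..<m}-{i}. real_of_ereal (g j x))"
    by (simp add: sum_subtractf)
  show "(f xk1 + (\<Sum>j<m. real_of_ereal (g j xk1))) - (f x + (\<Sum>j<m. real_of_ereal (g j x)))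
      \<le> f xk - f x
        + ((\<Sum>j\<in>{..<m}-{i}. real_of_ereal (g j xk) - real_of_ereal (g j x))
           + blockU blk i (gradf xk) \<bullet> (x - xk)
           + (lamk - \<beta> *\<^sub>R rk) \<bullet> (A *v blockU blk i (xk - x)))
        + (lamk - \<beta> *\<^sub>R rk) \<bullet> (A *v (xk1 - xk))
        + (1/2) * ((x - xk) \<bullet> (P *v (x - xk))) - (1/2) * ((x - xk1) \<bullet> (P *v (x - xk1)))
        - \<beta>/2 * (norm (A *v (xk1 - xk)))\<^sup>2"
  proof -
    have desc': "f xk1 \<le> f xk + gradf xk \<bullet> d + (Li * (norm d)^2)/2" using desc by simp
    have P1': "c \<bullet> xk1 + real_of_ereal (g i xk1) + q d/2 + q (z - xk1)/2 \<le> c \<bullet> z + real_of_ereal (g i x) + q (z - xk)/2"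
      by (rule P1)
    have "(f xk1 + (real_of_ereal (g i xk1) + (\<Sum>j\<in>{..<m}-{i}. real_of_ereal (g j xk)))) - (f x + (real_of_ereal (g i x) + (\<Sum>j\<in>{..<m}-{i}. real_of_ereal (g j x))))
      \<le> f xk - f x
        + (((\<Sum>j\<in>{..<m}-{i}. real_of_ereal (g j xk)) - (\<Sum>j\<in>{..<m}-{i}. real_of_ereal (g j x)))
           + blockU blk i (gradf xk) \<bullet> (x - xk)
           + \<mu> \<bullet> (A *v blockU blk i (xk - x)))
        + \<mu> \<bullet> (A *v d)
        + q (x - xk) / 2 - q (x - xk1) / 2
        - (\<beta> * (norm (A *v d))\<^sup>2) / 2"
      using P1' qsplit cz desc' pb by linarith
    thus ?thesis unfolding gsum[of xk1] gsum[of x] geq sdiff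
      by (simp add: q_def d_def \<mu>_def)
  qed
qed




lemma argmin_prox:
  fixes blk :: "'n::finite \<Rightarrow> nat" and g :: "real^'n \<Rightarrow> ereal"
    and P :: "real^'n^'n" and c xk y z :: "real^'n" and i :: nat
  assumes gb: "block_fun blk i g" and gp: "proper_fun g" and gc: "convex_ereal g"
    and P_psd: "\<forall>v. 0 \<le> v \<bullet> (P *v v)"
    and keep: "\<forall>j. blk j \<noteq> i \<longrightarrow> y $ j = xk $ j"
    and zadm: "\<forall>j. blk j \<noteq> i \<longrightarrow> z $ j = xk $ j"
    and gz: "g z < \<infinity>"
    and argmin: "\<forall>z. (\<forall>j. blk j \<noteq> i \<longrightarrow> z $ j = xk $ j) \<longrightarrow>
        ereal (c \<bullet> y) + g y + ereal ((1/2) * ((y - xk) \<bullet> (P *v (y - xk))))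
        \<le> ereal (c \<bullet> z) + g z + ereal ((1/2) * ((z - xk) \<bullet> (P *v (z - xk))))"
  shows "g y < \<infinity>"
    and "c \<bullet> y + real_of_ereal (g y) + (y - xk) \<bullet> (P *v (y - xk))/2 + (z - y) \<bullet> (P *v (z - y))/2
         \<le> c \<bullet> z + real_of_ereal (g z) + (z - xk) \<bullet> (P *v (z - xk))/2"
proof -
  define h where "h v = ereal (c \<bullet> v) + g v" for v
  have gni: "\<forall>v. -\<infinity> < g v" using gp unfolding proper_fun_def by auto
  have hni: "\<forall>v. -\<infinity> < h v" using gni by (simp add: h_def)
  have hz: "h z < \<infinity>" using gz gni unfolding h_def by (cases "g z") auto
  have conv: "\<forall>t. 0<t \<and> t<1 \<longrightarrow> h (t *\<^sub>R z + (1-t) *\<^sub>R y) \<le> ereal t * h z + ereal (1-t) * h y"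
  proof (intro allI impI)
    fix t :: real assume t: "0 < t \<and> t < 1"
    have "g (t *\<^sub>R z + (1-t) *\<^sub>R y) \<le> ereal t * g z + ereal (1-t) * g y"
      using gc t unfolding convex_ereal_def by auto
    moreover have "c \<bullet> (t *\<^sub>R z + (1-t) *\<^sub>R y) = t * (c \<bullet> z) + (1-t) * (c \<bullet> y)"
      by (simp add: inner_simps)
    ultimately have "h (t *\<^sub>R z + (1-t) *\<^sub>R y) \<le> ereal (t * (c \<bullet> z) + (1-t) * (c \<bullet> y)) + (ereal t * g z + ereal (1-t) * g y)"
      unfolding h_def by (metis add_left_mono)
    also have "\<dots> = ereal t * h z + ereal (1-t) * h y"
      using gni t unfolding h_def
      by (cases "g z"; cases "g y") (auto simp: algebra_simps)
    finally show "h (t *\<^sub>R z + (1-t) *\<^sub>R y) \<le> ereal t * h z + ereal (1-t) * h y" .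
  qed
  have mn: "\<forall>t. 0<t \<and> t\<le>1 \<longrightarrow> h y + ereal ((y - xk) \<bullet> (P *v (y - xk))/2)
        \<le> h (t *\<^sub>R z + (1-t) *\<^sub>R y) + ereal ((t *\<^sub>R z + (1-t) *\<^sub>R y - xk) \<bullet> (P *v (t *\<^sub>R z + (1-t) *\<^sub>R y - xk))/2)"
  proof (intro allI impI)
    fix t :: real assume t: "0 < t \<and> t \<le> 1"
    have adm: "\<forall>j. blk j \<noteq> i \<longrightarrow> (t *\<^sub>R z + (1-t) *\<^sub>R y) $ j = xk $ j"
      using zadm keep by (auto simp: algebra_simps)
    from argmin[rule_format, of "t *\<^sub>R z + (1-t) *\<^sub>R y"] adm show "h y + ereal ((y - xk) \<bullet> (P *v (y - xk))/2)
        \<le> h (t *\<^sub>R z + (1-t) *\<^sub>R y) + ereal ((t *\<^sub>R z + (1-t) *\<^sub>R y - xk) \<bullet> (P *v (t *\<^sub>R z + (1-t) *\<^sub>R y - xk))/2)"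
      unfolding h_def by (simp add: add.assoc)
  qed
  note pr = prox_ineq[of h z y xk P, OF hni hz conv mn P_psd]
  from pr(1) show g1: "g y < \<infinity>" by (simp add: h_def)
  have hre: "real_of_ereal (h v) = c \<bullet> v + real_of_ereal (g v)" if "g v < \<infinity>" for v
    using that gni unfolding h_def by (cases "g v") auto
  show "c \<bullet> y + real_of_ereal (g y) + (y - xk) \<bullet> (P *v (y - xk))/2 + (z - y) \<bullet> (P *v (z - y))/2
         \<le> c \<bullet> z + real_of_ereal (g z) + (z - xk) \<bullet> (P *v (z - xk))/2"
    using pr(2) hre[OF g1] hre[OF gz] by simp
qed

lemma argmin_unique:
  fixes blk :: "'n::finite \<Rightarrow> nat" and g :: "real^'n \<Rightarrow> ereal"
    and P :: "real^'n^'n" and A :: "real^'n^'q::finite" and c xk y1 y2 x :: "real^'n" and i :: nat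
  assumes gb: "block_fun blk i g" and gp: "proper_fun g" and gc: "convex_ereal g"
    and P_psd: "\<forall>v. 0 \<le> v \<bullet> (P *v v)"
    and P_bound: "\<forall>v. v = blockU blk i v \<longrightarrow> Li * (norm v)\<^sup>2 + \<beta> * (norm (A *v v))\<^sup>2 \<le> v \<bullet> (P *v v)"
    and Lpos: "Li > 0" and bpos: "\<beta> > 0"
    and gx: "g x < \<infinity>"
    and keep1: "\<forall>j. blk j \<noteq> i \<longrightarrow> y1 $ j = xk $ j"
    and keep2: "\<forall>j. blk j \<noteq> i \<longrightarrow> y2 $ j = xk $ j"
    and am1: "\<forall>z. (\<forall>j. blk j \<noteq> i \<longrightarrow> z $ j = xk $ j) \<longrightarrow>
        ereal (c \<bullet> y1) + g y1 + ereal ((1/2) * ((y1 - xk) \<bullet> (P *v (y1 - xk))))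
        \<le> ereal (c \<bullet> z) + g z + ereal ((1/2) * ((z - xk) \<bullet> (P *v (z - xk))))"
    and am2: "\<forall>z. (\<forall>j. blk j \<noteq> i \<longrightarrow> z $ j = xk $ j) \<longrightarrow>
        ereal (c \<bullet> y2) + g y2 + ereal ((1/2) * ((y2 - xk) \<bullet> (P *v (y2 - xk))))
        \<le> ereal (c \<bullet> z) + g z + ereal ((1/2) * ((z - xk) \<bullet> (P *v (z - xk))))"
  shows "y1 = y2"
proof -
  define z0 where "z0 = xk + blockU blk i (x - xk)"
  have z0adm: "\<forall>j. blk j \<noteq> i \<longrightarrow> z0 $ j = xk $ j" by (simp add: z0_def blockU_def)
  have gz0: "g z0 = g x" using gb unfolding block_fun_def by (auto simp: z0_def blockU_def)
  have g1: "g y1 < \<infinity>" using argmin_prox(1)[OF gb gp gc P_psd keep1 z0adm _ am1] gz0 gx by simp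
  have g2: "g y2 < \<infinity>" using argmin_prox(1)[OF gb gp gc P_psd keep2 z0adm _ am2] gz0 gx by simp
  note i1 = argmin_prox(2)[OF gb gp gc P_psd keep1 keep2 g2 am1]
  note i2 = argmin_prox(2)[OF gb gp gc P_psd keep2 keep1 g1 am2]
  define v where "v = y1 - y2"
  have qv: "(y2 - y1) \<bullet> (P *v (y2 - y1)) = v \<bullet> (P *v v)"
    unfolding v_def by (simp add: algebra_simps inner_simps)
  have vle: "v \<bullet> (P *v v) \<le> 0" using i1 i2 qv unfolding v_def by simp
  have vU: "v = blockU blk i v" using keep1 keep2 by (auto simp: v_def blockU_def vec_eq_iff)
  have pb: "Li * (norm v)\<^sup>2 + \<beta> * (norm (A *v v))\<^sup>2 \<le> v \<bullet> (P *v v)" using P_bound vU by blast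
  have "\<beta> * (norm (A *v v))\<^sup>2 \<ge> 0" using bpos by simp
  hence "Li * (norm v)\<^sup>2 \<le> 0" using pb vle by linarith
  hence "norm v = 0" using Lpos by (simp add: mult_le_0_iff)
  thus ?thesis by (simp add: v_def)
qed




definition ipath :: "(nat \<Rightarrow> 'w \<Rightarrow> nat) \<Rightarrow> nat \<Rightarrow> 'w \<Rightarrow> nat list" where
  "ipath idx n w = map (\<lambda>j. idx j w) [0..<n]"

definition Paths :: "nat \<Rightarrow> nat \<Rightarrow> nat list set" where
  "Paths m n = {p. length p = n \<and> set p \<subseteq> {..<m}}"

lemma ipath_Suc: "ipath idx (Suc n) w = ipath idx n w @ [idx n w]"
  by (simp add: ipath_def)

lemma ipath_length[simp]: "length (ipath idx n w) = n"
  by (simp add: ipath_def)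

lemma ipath_eq_iff: "ipath idx n w = p \<longleftrightarrow> length p = n \<and> (\<forall>j<n. idx j w = p ! j)"
  by (auto simp: ipath_def list_eq_iff_nth_eq)

lemma ipath_in: "(\<forall>j. idx j w < m) \<Longrightarrow> ipath idx n w \<in> Paths m n"
  by (auto simp: ipath_def Paths_def)

lemma Paths_finite: "finite (Paths m n)"
proof -
  have "Paths m n = {xs. set xs \<subseteq> {..<m} \<and> length xs = n}" by (auto simp: Paths_def)
  thus ?thesis by (simp add: finite_lists_length_eq)
qed

lemma Paths_Suc: "Paths m (Suc n) = (\<lambda>(q, i). q @ [i]) ` (Paths m n \<times> {..<m})"
proof (intro set_eqI iffI)
  fix p assume p: "p \<in> Paths m (Suc n)"
  then have "p \<noteq> []" by (auto simp: Paths_def)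
  then have "p = butlast p @ [last p]" by simp
  moreover have "butlast p \<in> Paths m n" using p by (auto simp: Paths_def dest: in_set_butlastD)
  moreover have "last p < m"
  proof -
    have "last p \<in> set p" using \<open>p \<noteq> []\<close> by simp
    thus ?thesis using p by (auto simp: Paths_def)
  qed
  ultimately show "p \<in> (\<lambda>(q, i). q @ [i]) ` (Paths m n \<times> {..<m})" by force
qed (auto simp: Paths_def)

lemma sum_Paths_Suc: "(\<Sum>p\<in>Paths m (Suc n). H p) = (\<Sum>q\<in>Paths m n. \<Sum>i<m. H (q @ [i]))"
proof -
  have inj: "inj_on (\<lambda>(q, i). q @ [i]) (Paths m n \<times> {..<m})"
    by (auto simp: inj_on_def)
  show ?thesis unfolding Paths_Suc sum.reindex[OF inj]
    by (simp add: sum.cartesian_product case_prod_beta)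
qed

context prob_space
begin

lemma event_idx:
  assumes ind: "indep_vars (\<lambda>_. count_space UNIV) idx UNIV"
  shows "{w \<in> space M. idx j w = c} \<in> events"
proof -
  have "random_variable (count_space UNIV) (idx j)" using ind unfolding indep_vars_def2 by auto
  hence "idx j -` {c} \<inter> space M \<in> events" by (rule measurable_sets) simp
  moreover have "idx j -` {c} \<inter> space M = {w \<in> space M. idx j w = c}" by auto
  ultimately show ?thesis by simp
qed

lemma event_ipath:
  assumes ind: "indep_vars (\<lambda>_. count_space UNIV) idx UNIV"
  shows "{w \<in> space M. ipath idx n w = p} \<in> events"
proof (cases "length p = n")
  case True
  have "{w \<in> space M. ipath idx n w = p} = space M \<inter> (\<Inter>j\<in>{..<n}. {w \<in> space M. idx j w = p ! j})"
    using True by (auto simp: ipath_eq_iff)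
  also have "\<dots> \<in> events" using event_idx[OF ind] by auto
  finally show ?thesis .
next
  case False
  hence e: "{w \<in> space M. ipath idx n w = p} = {}" by auto
  show ?thesis unfolding e by simp
qed

lemma prob_ipath:
  assumes ind: "indep_vars (\<lambda>_. count_space UNIV) idx UNIV"
    and unif: "\<forall>k i. i < m \<longrightarrow> measure M {w \<in> space M. idx k w = i} = 1 / real m"
    and p: "p \<in> Paths m n"
  shows "prob {w \<in> space M. ipath idx n w = p} = (1 / real m) ^ n"
proof (cases "n = 0")
  case True
  with p have "p = []" by (auto simp: Paths_def)
  with True show ?thesis by (simp add: ipath_def prob_space)
next
  case False
  have len: "length p = n" and pm: "\<forall>j<n. p ! j < m" using p nth_mem by (fastforce simp: Paths_def)+
  define F where "F j = {idx j -` A \<inter> space M | A. A \<in> sets (count_space (UNIV::nat set))}" for j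
  have indep: "indep_sets F UNIV" using ind unfolding indep_vars_def2 F_def by auto
  define B where "B j = idx j -` {p ! j} \<inter> space M" for j
  have BF: "\<forall>j\<in>{..<n}. B j \<in> F j" by (auto simp: B_def F_def)
  have eq: "{w \<in> space M. ipath idx n w = p} = (\<Inter>j\<in>{..<n}. B j)"
    using len False by (auto simp: ipath_eq_iff B_def)
  have "prob (\<Inter>j\<in>{..<n}. B j) = (\<Prod>j\<in>{..<n}. prob (B j))"
    using indep_setsD[OF indep _ _ _ BF] False by auto
  also have "\<dots> = (\<Prod>j\<in>{..<n}. 1 / real m)"
  proof (intro prod.cong refl)
    fix j assume "j \<in> {..<n}"
    hence "B j = {w \<in> space M. idx j w = p ! j}" "p ! j < m" using pm by (auto simp: B_def)
    thus "prob (B j) = 1 / real m" using unif by simp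
  qed
  finally show ?thesis using eq by simp
qed

lemma integral_ipath:
  assumes ind: "indep_vars (\<lambda>_. count_space UNIV) idx UNIV"
    and unif: "\<forall>k i. i < m \<longrightarrow> measure M {w \<in> space M. idx k w = i} = 1 / real m"
    and range: "\<forall>k. \<forall>w\<in>space M. idx k w < m"
  shows "integrable M (\<lambda>w. H (ipath idx n w))"
    and "(\<integral>w. H (ipath idx n w) \<partial>M) = (\<Sum>p\<in>Paths m n. H p * (1 / real m) ^ n)"
proof -
  have rep: "H (ipath idx n w) = (\<Sum>p\<in>Paths m n. H p * indicator {w \<in> space M. ipath idx n w = p} w)"
    if w: "w \<in> space M" for w
  proof -
    have inP: "ipath idx n w \<in> Paths m n" using range w by (auto simp: ipath_def Paths_def)
    have "(\<Sum>p\<in>Paths m n. H p * indicator {w \<in> space M. ipath idx n w = p} w)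
       = (\<Sum>p\<in>Paths m n. if p = ipath idx n w then H p else 0)"
      using w by (intro sum.cong refl) (auto simp: indicator_def)
    also have "\<dots> = H (ipath idx n w)" using inP Paths_finite by (simp add: sum.delta')
    finally show ?thesis by simp
  qed
  have int: "integrable M (\<lambda>w. \<Sum>p\<in>Paths m n. H p * indicator {w \<in> space M. ipath idx n w = p} w)"
    by (intro Bochner_Integration.integrable_sum integrable_mult_right integrable_real_indicator) (auto simp: less_top[symmetric] intro: event_ipath[OF ind])
  show "integrable M (\<lambda>w. H (ipath idx n w))"
  proof -
    have "integrable M (\<lambda>w. H (ipath idx n w)) \<longleftrightarrow> integrable M (\<lambda>w. \<Sum>p\<in>Paths m n. H p * indicator {w \<in> space M. ipath idx n w = p} w)"
      by (rule Bochner_Integration.integrable_cong) (simp_all add: rep)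
    thus ?thesis using int by simp
  qed
  have "(\<integral>w. H (ipath idx n w) \<partial>M) = (\<integral>w. (\<Sum>p\<in>Paths m n. H p * indicator {w \<in> space M. ipath idx n w = p} w) \<partial>M)"
    by (intro Bochner_Integration.integral_cong refl) (simp add: rep)
  also have "\<dots> = (\<Sum>p\<in>Paths m n. H p * prob {w \<in> space M. ipath idx n w = p})"
    using event_ipath[OF ind] by (subst Bochner_Integration.integral_sum) (auto simp: Int_absorb1 sets.sets_into_space less_top[symmetric] intro!: integrable_mult_right integrable_real_indicator)
  also have "\<dots> = (\<Sum>p\<in>Paths m n. H p * (1 / real m) ^ n)"
    by (intro sum.cong refl) (simp add: prob_ipath[OF ind unif])
  finally show "(\<integral>w. H (ipath idx n w) \<partial>M) = (\<Sum>p\<in>Paths m n. H p * (1 / real m) ^ n)" .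
qed

end




lemma enn2ereal_fin: "(A::ennreal) < \<infinity> \<Longrightarrow> enn2ereal A = ereal (enn2real A)"
  by (cases A rule: ennreal_cases) (auto simp: enn2real_def)

lemma eexp_le:
  fixes Y :: "'w \<Rightarrow> ereal" and Z :: "'w \<Rightarrow> real"
  assumes le: "\<forall>w\<in>space M. Y w \<le> ereal (Z w)" and int: "integrable M Z"
  shows "eexpectation M Y \<le> ereal (\<integral>w. Z w \<partial>M)"
proof -
  define A where "A = (\<integral>\<^sup>+ w. ennreal (Z w) \<partial>M)"
  define B where "B = (\<integral>\<^sup>+ w. ennreal (- Z w) \<partial>M)"
  have fin: "(\<integral>\<^sup>+ w. ennreal (norm (Z w)) \<partial>M) < \<infinity>" using int by (simp add: integrable_iff_bounded)
  have Af: "A < \<infinity>" unfolding A_def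
    by (rule le_less_trans[OF _ fin]) (intro nn_integral_mono ennreal_leI, simp)
  have Bf: "B < \<infinity>" unfolding B_def
    by (rule le_less_trans[OF _ fin]) (intro nn_integral_mono ennreal_leI, simp)
  have a: "(\<integral>\<^sup>+ w. e2ennreal (Y w) \<partial>M) \<le> A" unfolding A_def
    using le by (intro nn_integral_mono) (metis e2ennreal_ereal e2ennreal_mono)
  have b: "B \<le> (\<integral>\<^sup>+ w. e2ennreal (- Y w) \<partial>M)" unfolding B_def
  proof (intro nn_integral_mono)
    fix w assume "w \<in> space M"
    hence "Y w \<le> ereal (Z w)" using le by blast
    hence "- ereal (Z w) \<le> - Y w" by (rule ereal_minus_le_minus[THEN iffD2])
    hence "ereal (- Z w) \<le> - Y w" by simp
    thus "ennreal (- Z w) \<le> e2ennreal (- Y w)" by (metis e2ennreal_ereal e2ennreal_mono)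
  qed
  have "eexpectation M Y \<le> enn2ereal A - enn2ereal B"
    unfolding eexpectation_def
    by (intro ereal_minus_mono) (use a b in \<open>auto simp: less_eq_ennreal.rep_eq\<close>)
  also have "\<dots> = ereal (enn2real A - enn2real B)" using Af Bf by (simp add: enn2ereal_fin)
  also have "enn2real A - enn2real B = (\<integral>w. Z w \<partial>M)"
    unfolding A_def B_def by (rule real_lebesgue_integral_def[OF int, symmetric])
  finally show ?thesis .
qed




theorem mainTheorem7:
  fixes M :: "'w measure"
    and m :: nat and blk :: "'n::finite \<Rightarrow> nat"
    and f :: "real^'n \<Rightarrow> real" and gradf :: "real^'n \<Rightarrow> real^'n"
    and g :: "nat \<Rightarrow> real^'n \<Rightarrow> ereal"
    and A :: "real^'n^'q::finite" and b :: "real^'q"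
    and L :: "nat \<Rightarrow> real" and Lr :: real
    and P :: "real^'n^'n" and \<beta> \<rho> :: real
    and idx :: "nat \<Rightarrow> 'w \<Rightarrow> nat"
    and xs :: "nat \<Rightarrow> 'w \<Rightarrow> real^'n" and rs lams :: "nat \<Rightarrow> 'w \<Rightarrow> real^'q"
    and x0 :: "real^'n"
    and K :: nat and x :: "real^'n" and lam :: "'w \<Rightarrow> real^'q"
  assumes M: "prob_space M"
    and m_pos: "m \<ge> 1"
    and blk_range: "\<forall>j. blk j < m" and blk_nonempty: "\<forall>i<m. \<exists>j. blk j = i"
    (* f convex, continuously differentiable *)
    and f_convex: "convex_on UNIV f"
    and f_grad: "\<forall>z. (f has_derivative (\<lambda>h. gradf z \<bullet> h)) (at z)"
    and gradf_cont: "continuous_on UNIV gradf"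
    (* g_i proper, convex, lsc functions of the block x_i *)
    and g_block: "\<forall>i<m. block_fun blk i (g i)"
    and g_proper: "\<forall>i<m. proper_fun (g i)"
    and g_convex: "\<forall>i<m. convex_ereal (g i)"
    and g_lsc: "\<forall>i<m. lsc_ereal (g i)"
    (* gradient Lipschitz continuity *)
    and L_pos: "\<forall>i<m. L i > 0"
    and Lip_block: "\<forall>i<m. \<forall>z y. norm (blockU blk i (gradf (z + blockU blk i y) - gradf z))
                         \<le> L i * norm (blockU blk i y)"
    and Lip_full: "\<forall>i<m. \<forall>z y. norm (gradf (z + blockU blk i y) - gradf z) \<le> Lr * norm (blockU blk i y)"
    (* P = blkdiag(P_1,...,P_m), each P_i symmetric PSD with P_i \<succeq> L_i I + beta A_i^T A_i *)
    and P_sym: "transpose P = P"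
    and P_blkdiag: "\<forall>j l. blk j \<noteq> blk l \<longrightarrow> P $ j $ l = 0"
    and P_psd: "\<forall>v. 0 \<le> v \<bullet> (P *v v)"
    and P_bound: "\<forall>i<m. \<forall>v. v = blockU blk i v \<longrightarrow>
                     L i * (norm v)\<^sup>2 + \<beta> * (norm (A *v v))\<^sup>2 \<le> v \<bullet> (P *v v)"
    (* parameters *)
    and beta_pos: "\<beta> > 0" and rho_pos: "0 < \<rho>" and rho_le: "\<rho> \<le> \<beta> / real m"
    (* i_k uniform on {0..m-1}, independent *)
    and idx_indep: "prob_space.indep_vars M (\<lambda>_. count_space UNIV) idx UNIV"
    and idx_range: "\<forall>k. \<forall>w\<in>space M. idx k w < m"
    and idx_unif: "\<forall>k i. i < m \<longrightarrow> measure M {w \<in> space M. idx k w = i} = 1 / real m"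
    (* Algorithm 1 *)
    and init_x: "\<forall>w\<in>space M. xs 0 w = x0"
    and init_r: "\<forall>w\<in>space M. rs 0 w = A *v x0 - b"
    and init_lam: "\<forall>w\<in>space M. lams 0 w = 0"
    and upd_keep: "\<forall>k. \<forall>w\<in>space M. \<forall>j. blk j \<noteq> idx k w \<longrightarrow> xs (Suc k) w $ j = xs k w $ j"
    and upd_argmin: "\<forall>k. \<forall>w\<in>space M. \<forall>z. (\<forall>j. blk j \<noteq> idx k w \<longrightarrow> z $ j = xs k w $ j) \<longrightarrow>
        ereal (blockU blk (idx k w) (gradf (xs k w) - transpose A *v (lams k w - \<beta> *\<^sub>R rs k w)) \<bullet> xs (Suc k) w)
          + g (idx k w) (xs (Suc k) w)
          + ereal ((1/2) * ((xs (Suc k) w - xs k w) \<bullet> (P *v (xs (Suc k) w - xs k w))))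
        \<le> ereal (blockU blk (idx k w) (gradf (xs k w) - transpose A *v (lams k w - \<beta> *\<^sub>R rs k w)) \<bullet> z)
          + g (idx k w) z
          + ereal ((1/2) * ((z - xs k w) \<bullet> (P *v (z - xs k w))))"
    and upd_r: "\<forall>k. \<forall>w\<in>space M. rs (Suc k) w = rs k w + A *v (xs (Suc k) w - xs k w)"
    and upd_lam: "\<forall>k. \<forall>w\<in>space M. lams (Suc k) w = lams k w - \<rho> *\<^sub>R rs (Suc k) w"
    (* the comparison point and the multiplier *)
    and K_pos: "K \<ge> 1"
    and x_feas: "A *v x = b"
    and x_dom: "\<bar>Fobj f g m x\<bar> \<noteq> \<infinity>"
    and lam_meas: "lam \<in> borel_measurable M"
    and lam_sq: "integrable M (\<lambda>w. (norm (lam w))\<^sup>2)"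
  shows "eexpectation M (\<lambda>w. Phi f g m A b
            ((1 / (1 + real K / real m)) *\<^sub>R (xs (Suc K) w + (1 / real m) *\<^sub>R (\<Sum>k=1..K. xs k w)))
            x (lam w))
    \<le> ereal (1 / (1 + real K / real m)) *
       ( ereal (1 - 1 / real m) * (Fobj f g m x0 - Fobj f g m x)
         + ereal ((1/2) * ((x0 - x) \<bullet> (P *v (x0 - x))))
         + ereal ((\<beta> / 2 - \<beta> / real m) * (norm (A *v x0 - b))\<^sup>2)
         + ereal (1 / (2 * real m * \<rho>) * (\<integral>w. (norm (lam w))\<^sup>2 \<partial>M)))"
proof -
  interpret prob_space M by (rule M)
  define a where "a = 1 - 1 / real m"
  define T where "T = 1 + real K / real m"
  define gr where "gr j y = real_of_ereal (g j y)" for j y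
  define Fr where "Fr y = f y + (\<Sum>j<m. gr j y)" for y
  define q where "q v = v \<bullet> (P *v v)" for v
  define mu where "mu k w = lams k w - \<beta> *\<^sub>R rs k w" for k w
  define Dw where "Dw k w i = (\<Sum>j\<in>{..<m}-{i}. gr j (xs k w) - gr j x)
      + blockU blk i (gradf (xs k w)) \<bullet> (x - xs k w) + mu k w \<bullet> (A *v blockU blk i (xs k w - x))" for k w i
  define Mw where "Mw k w = Dw k w (idx k w) - (1 / real m) * (\<Sum>i<m. Dw k w i)" for k w
  have mpos: "real m > 0" using m_pos by simp
  have Tpos: "T > 0" unfolding T_def using mpos by (simp add: add_pos_nonneg)
  have rs_eq: "\<forall>w\<in>space M. rs k w = A *v xs k w - b" for k
  proof (induction k)
    case 0 show ?case using init_r init_x by simp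
  next
    case (Suc k) show ?case
    proof
      fix w assume w: "w \<in> space M"
      have "rs (Suc k) w = rs k w + A *v (xs (Suc k) w - xs k w)" using upd_r w by blast
      moreover have "rs k w = A *v xs k w - b" using Suc.IH w by blast
      ultimately show "rs (Suc k) w = A *v xs (Suc k) w - b"
        by (simp add: matrix_vector_mult_diff_distrib)
    qed
  qed
  have lams_eq: "\<forall>w\<in>space M. lams k w = -(\<rho> *\<^sub>R (\<Sum>j\<in>{1..k}. rs j w))" for k
  proof (induction k)
    case 0 show ?case using init_lam by simp
  next
    case (Suc k) show ?case
    proof
      fix w assume w: "w \<in> space M"
      have "lams (Suc k) w = lams k w - \<rho> *\<^sub>R rs (Suc k) w" using upd_lam w by blast
      moreover have "lams k w = -(\<rho> *\<^sub>R (\<Sum>j\<in>{1..k}. rs j w))" using Suc.IH w by blast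
      ultimately have "lams (Suc k) w = -(\<rho> *\<^sub>R (\<Sum>j\<in>{1..k}. rs j w)) - \<rho> *\<^sub>R rs (Suc k) w" by simp
      also have "\<dots> = -(\<rho> *\<^sub>R ((\<Sum>j\<in>{1..k}. rs j w) + rs (Suc k) w))" by (simp add: scaleR_right_distrib)
      also have "(\<Sum>j\<in>{1..k}. rs j w) + rs (Suc k) w = (\<Sum>j\<in>{1..Suc k}. rs j w)" by simp
      finally show "lams (Suc k) w = -(\<rho> *\<^sub>R (\<Sum>j\<in>{1..Suc k}. rs j w))" .
    qed
  qed
  have gni: "\<forall>j<m. \<forall>v. -\<infinity> < g j v" using g_proper unfolding proper_fun_def by auto
  have x_fin: "\<forall>j<m. \<bar>g j x\<bar> \<noteq> \<infinity>"
  proof (intro allI impI)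
    fix j assume j: "j < m"
    show "\<bar>g j x\<bar> \<noteq> \<infinity>"
    proof
      assume "\<bar>g j x\<bar> = \<infinity>"
      hence "g j x = \<infinity>" using gni j by auto
      hence "(\<Sum>i<m. g i x) = \<infinity>" using j by (auto simp: sum_Pinfty)
      hence "Fobj f g m x = \<infinity>" by (simp add: Fobj_def)
      thus False using x_dom by simp
    qed
  qed
  have Fobj_fin: "Fobj f g m y = ereal (Fr y)" if "\<forall>j<m. \<bar>g j y\<bar> \<noteq> \<infinity>" for y
  proof -
    have "(\<Sum>j<m. g j y) = (\<Sum>j<m. ereal (gr j y))"
      using that by (intro sum.cong refl) (auto simp: gr_def)
    thus ?thesis by (simp add: Fobj_def Fr_def)
  qed
  have mv_sum: "A *v (\<Sum>i\<in>S. v i) = (\<Sum>i\<in>S. A *v v i)" for S :: "'a set" and v :: "'a \<Rightarrow> real^'n"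
    by (induct S rule: infinite_finite_induct) (simp_all add: matrix_vector_right_distrib)
  have step: "g (idx k w) (xs (Suc k) w) < \<infinity> \<and>
      Fr (xs (Suc k) w) - Fr x \<le> f (xs k w) - f x + Dw k w (idx k w)
        + mu k w \<bullet> (A *v (xs (Suc k) w - xs k w))
        + (1/2) * q (x - xs k w) - (1/2) * q (x - xs (Suc k) w)
        - \<beta>/2 * (norm (A *v (xs (Suc k) w - xs k w)))\<^sup>2" if w: "w \<in> space M" for k w
  proof -
    have i: "idx k w < m" using idx_range w by auto
    have Li: "\<forall>z y. norm (blockU blk (idx k w) (gradf (z + blockU blk (idx k w) y) - gradf z)) \<le> L (idx k w) * norm (blockU blk (idx k w) y)"
      using Lip_block i by blast
    have Pb: "\<forall>v. v = blockU blk (idx k w) v \<longrightarrow> L (idx k w) * (norm v)\<^sup>2 + \<beta> * (norm (A *v v))\<^sup>2 \<le> v \<bullet> (P *v v)"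
      using P_bound i by blast
    have kp: "\<forall>j. blk j \<noteq> idx k w \<longrightarrow> xs (Suc k) w $ j = xs k w $ j" using upd_keep w by blast
    have am: "\<forall>z. (\<forall>j. blk j \<noteq> idx k w \<longrightarrow> z $ j = xs k w $ j) \<longrightarrow>
        ereal (blockU blk (idx k w) (gradf (xs k w) - transpose A *v (lams k w - \<beta> *\<^sub>R rs k w)) \<bullet> xs (Suc k) w)
          + g (idx k w) (xs (Suc k) w)
          + ereal ((1/2) * ((xs (Suc k) w - xs k w) \<bullet> (P *v (xs (Suc k) w - xs k w))))
        \<le> ereal (blockU blk (idx k w) (gradf (xs k w) - transpose A *v (lams k w - \<beta> *\<^sub>R rs k w)) \<bullet> z)
          + g (idx k w) z
          + ereal ((1/2) * ((z - xs k w) \<bullet> (P *v (z - xs k w))))" using upd_argmin w by blast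
    note S = step_ineq[OF f_grad i g_block g_proper g_convex Li P_blkdiag P_psd Pb kp am x_fin]
    show ?thesis using S unfolding Fr_def gr_def Dw_def mu_def q_def by simp
  qed
  have avg: "(1 / real m) * (\<Sum>i<m. Dw k w i) = a * ((\<Sum>j<m. gr j (xs k w)) - (\<Sum>j<m. gr j x))
      + (1 / real m) * (gradf (xs k w) \<bullet> (x - xs k w)) + (1 / real m) * (mu k w \<bullet> rs k w)"
    if w: "w \<in> space M" for k w
  proof -
    define c where "c j = gr j (xs k w) - gr j x" for j
    have s1: "(\<Sum>i<m. \<Sum>j\<in>{..<m}-{i}. c j) = (real m - 1) * (\<Sum>j<m. c j)"
    proof -
      have "(\<Sum>i<m. \<Sum>j\<in>{..<m}-{i}. c j) = (\<Sum>i<m. (\<Sum>j<m. c j) - c i)"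
        by (intro sum.cong refl) (simp add: sum_diff1)
      also have "\<dots> = real m * (\<Sum>j<m. c j) - (\<Sum>j<m. c j)" by (simp add: sum_subtractf)
      finally show ?thesis by (simp add: algebra_simps)
    qed
    have s2: "(\<Sum>i<m. blockU blk i (gradf (xs k w)) \<bullet> (x - xs k w)) = gradf (xs k w) \<bullet> (x - xs k w)"
      by (simp add: inner_sum_left[symmetric] blockU_sum[OF blk_range])
    have s3: "(\<Sum>i<m. mu k w \<bullet> (A *v blockU blk i (xs k w - x))) = mu k w \<bullet> rs k w"
    proof -
      have "(\<Sum>i<m. mu k w \<bullet> (A *v blockU blk i (xs k w - x))) = mu k w \<bullet> (A *v (\<Sum>i<m. blockU blk i (xs k w - x)))"
        by (simp add: inner_sum_right mv_sum)
      also have "\<dots> = mu k w \<bullet> rs k w" using rs_eq w x_feas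
        by (simp add: blockU_sum[OF blk_range] matrix_vector_mult_diff_distrib)
      finally show ?thesis .
    qed
    have "(\<Sum>i<m. Dw k w i) = (real m - 1) * (\<Sum>j<m. c j) + gradf (xs k w) \<bullet> (x - xs k w) + mu k w \<bullet> rs k w"
      unfolding Dw_def c_def[symmetric] sum.distrib s1 s2 s3 ..
    moreover have "(\<Sum>j<m. c j) = (\<Sum>j<m. gr j (xs k w)) - (\<Sum>j<m. gr j x)" by (simp add: c_def sum_subtractf)
    ultimately show ?thesis using mpos unfolding a_def by (simp add: field_simps)
  qed
  have step2: "Fr (xs (Suc k) w) - Fr x \<le> a * (Fr (xs k w) - Fr x) + Mw k w
      + mu k w \<bullet> (rs (Suc k) w - a *\<^sub>R rs k w)
      + (q (x - xs k w) / 2 - q (x - xs (Suc k) w) / 2)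
      - \<beta>/2 * inner (rs (Suc k) w - rs k w) (rs (Suc k) w - rs k w)" if w: "w \<in> space M" for k w
  proof -
    have S: "Fr (xs (Suc k) w) - Fr x \<le> f (xs k w) - f x + Dw k w (idx k w)
        + mu k w \<bullet> (A *v (xs (Suc k) w - xs k w))
        + (1/2) * q (x - xs k w) - (1/2) * q (x - xs (Suc k) w)
        - \<beta>/2 * (norm (A *v (xs (Suc k) w - xs k w)))\<^sup>2" using step[OF w] by blast
    have dr: "A *v (xs (Suc k) w - xs k w) = rs (Suc k) w - rs k w"
      using rs_eq w by (simp add: matrix_vector_mult_diff_distrib)
    have cv: "gradf (xs k w) \<bullet> (x - xs k w) \<le> f x - f (xs k w)"
      using convex_grad[OF f_convex f_grad, of "xs k w" x] by simp
    have D: "Dw k w (idx k w) = Mw k w + a * ((\<Sum>j<m. gr j (xs k w)) - (\<Sum>j<m. gr j x))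
      + (1 / real m) * (gradf (xs k w) \<bullet> (x - xs k w)) + (1 / real m) * (mu k w \<bullet> rs k w)"
      using avg[OF w] unfolding Mw_def by simp
    have am: "a = 1 - 1 / real m" by (simp add: a_def)
    have mur: "mu k w \<bullet> (rs (Suc k) w - a *\<^sub>R rs k w) = mu k w \<bullet> (rs (Suc k) w - rs k w) + (1 / real m) * (mu k w \<bullet> rs k w)"
      unfolding am by (simp add: inner_simps algebra_simps)
    have cv': "(1 / real m) * (gradf (xs k w) \<bullet> (x - xs k w)) \<le> (1 / real m) * (f x - f (xs k w))"
      using cv mpos by (simp add: divide_right_mono)
    have fa: "f (xs k w) - f x + (1 / real m) * (f x - f (xs k w)) = a * (f (xs k w) - f x)"
      unfolding am by (simp add: algebra_simps)
    have Fa: "a * (Fr (xs k w) - Fr x) = a * (f (xs k w) - f x) + a * ((\<Sum>j<m. gr j (xs k w)) - (\<Sum>j<m. gr j x))"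
      unfolding Fr_def by (simp add: algebra_simps)
    have nr: "(norm (rs (Suc k) w - rs k w))\<^sup>2 = inner (rs (Suc k) w - rs k w) (rs (Suc k) w - rs k w)"
      by (simp add: power2_norm_eq_inner)
    show ?thesis using S D mur cv' fa Fa unfolding dr nr by linarith
  qed
  have sumshift1: "(\<Sum>k\<le>n. h (Suc k)) = (\<Sum>k\<in>{1..n}. h k) + h (Suc n)" for n and h :: "nat \<Rightarrow> real"
    by (induction n) simp_all
  have sumshift2: "(\<Sum>k\<le>n. h k) = h 0 + (\<Sum>k\<in>{1..n}. h k)" for n and h :: "nat \<Rightarrow> real"
    by (induction n) simp_all
  have path_bound: "(Fr (xs (Suc K) w) - Fr x) + (1 / real m) * (\<Sum>k\<in>{1..K}. Fr (xs k w) - Fr x)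
      - lam w \<bullet> (rs (Suc K) w + (1 / real m) *\<^sub>R (\<Sum>j\<in>{1..K}. rs j w))
    \<le> a * (Fr x0 - Fr x) + q (x - x0) / 2 + (\<beta>/2 - \<beta>/real m) * inner (rs 0 w) (rs 0 w)
      + inner (lam w) (lam w) / (2 * real m * \<rho>) + (\<Sum>k\<le>K. Mw k w)" if w: "w \<in> space M" for w
  proof -
    define F where "F k = Fr (xs k w) - Fr x" for k
    define E where "E k = mu k w \<bullet> (rs (Suc k) w - a *\<^sub>R rs k w)
      - \<beta>/2 * inner (rs (Suc k) w - rs k w) (rs (Suc k) w - rs k w)" for k
    define Q where "Q k = q (x - xs k w) / 2" for k
    have st: "F (Suc k) \<le> a * F k + Mw k w + E k + (Q k - Q (Suc k))" for k
      using step2[OF w, of k] unfolding F_def E_def Q_def by simp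
    have "(\<Sum>k\<le>K. F (Suc k)) \<le> (\<Sum>k\<le>K. a * F k + Mw k w + E k + (Q k - Q (Suc k)))"
      by (intro sum_mono st)
    also have "\<dots> = a * (\<Sum>k\<le>K. F k) + (\<Sum>k\<le>K. Mw k w) + (\<Sum>k\<le>K. E k) + (Q 0 - Q (Suc K))"
      by (simp add: sum.distrib sum_distrib_left sum_telescope)
    finally have S1: "(\<Sum>k\<in>{1..K}. F k) + F (Suc K) \<le> a * (F 0 + (\<Sum>k\<in>{1..K}. F k)) + (\<Sum>k\<le>K. Mw k w) + (\<Sum>k\<le>K. E k) + (Q 0 - Q (Suc K))"
      unfolding sumshift1 sumshift2 .
    have muS: "mu k w = -(\<rho> *\<^sub>R (\<Sum>j\<in>{1..k}. rs j w)) - \<beta> *\<^sub>R rs k w" for k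
      using lams_eq w by (simp add: mu_def)
    have dual: "(\<Sum>k\<le>K. E k) - lam w \<bullet> (rs (Suc K) w + (1 / real m) *\<^sub>R (\<Sum>j\<in>{1..K}. rs j w))
      \<le> (\<beta>/2 - \<beta>/real m) * inner (rs 0 w) (rs 0 w) + inner (lam w) (lam w) / (2 * real m * \<rho>)"
      using dual_ineq[OF m_pos beta_pos rho_pos rho_le, where K=K and r="\<lambda>k. rs k w" and lam="lam w"]
      unfolding E_def muS a_def by simp
    have Q0: "Q 0 = q (x - x0) / 2" using init_x w by (simp add: Q_def)
    have QK: "Q (Suc K) \<ge> 0" using P_psd by (simp add: Q_def q_def)
    have F0: "F 0 = Fr x0 - Fr x" using init_x w by (simp add: F_def)
    have aS: "a * (\<Sum>k\<in>{1..K}. F k) = (\<Sum>k\<in>{1..K}. F k) - (1 / real m) * (\<Sum>k\<in>{1..K}. F k)"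
      unfolding a_def by (simp add: algebra_simps)
    have "(F (Suc K)) + (1 / real m) * (\<Sum>k\<in>{1..K}. F k)
      - lam w \<bullet> (rs (Suc K) w + (1 / real m) *\<^sub>R (\<Sum>j\<in>{1..K}. rs j w))
      \<le> a * F 0 + q (x - x0) / 2 + (\<beta>/2 - \<beta>/real m) * inner (rs 0 w) (rs 0 w)
      + inner (lam w) (lam w) / (2 * real m * \<rho>) + (\<Sum>k\<le>K. Mw k w)"
      using S1 dual Q0 QK aS by (simp add: distrib_left)
    thus ?thesis unfolding F_def F0[unfolded F_def] by simp
  qed
  have uniq: "\<forall>w\<in>space M. \<forall>w'\<in>space M. ipath idx k w = ipath idx k w' \<longrightarrow>
      xs k w = xs k w' \<and> rs k w = rs k w' \<and> lams k w = lams k w'" for k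
  proof (induction k)
    case 0 show ?case using init_x init_r init_lam by simp
  next
    case (Suc k)
    show ?case
    proof (intro ballI impI)
      fix w w' assume w: "w \<in> space M" and w': "w' \<in> space M" and pe: "ipath idx (Suc k) w = ipath idx (Suc k) w'"
      have pk: "ipath idx k w = ipath idx k w'" and ik: "idx k w = idx k w'"
        using pe unfolding ipath_Suc append1_eq_conv by blast+
      have eq0: "xs k w = xs k w' \<and> rs k w = rs k w' \<and> lams k w = lams k w'"
        using Suc.IH w w' pk by blast
      have eq: "xs k w' = xs k w" "rs k w' = rs k w" "lams k w' = lams k w"
        using eq0 by simp_all
      define i where "i = idx k w"
      have i: "i < m" using idx_range w by (auto simp: i_def)
      have kp1: "\<forall>j. blk j \<noteq> i \<longrightarrow> xs (Suc k) w $ j = xs k w $ j" using upd_keep w by (auto simp: i_def)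
      have kp2': "\<forall>j. blk j \<noteq> idx k w' \<longrightarrow> xs (Suc k) w' $ j = xs k w' $ j" using upd_keep w' by blast
      have kp2: "\<forall>j. blk j \<noteq> i \<longrightarrow> xs (Suc k) w' $ j = xs k w $ j" using kp2'[unfolded eq ik[symmetric]] unfolding i_def .
      have am1: "\<forall>z. (\<forall>j. blk j \<noteq> i \<longrightarrow> z $ j = xs k w $ j) \<longrightarrow>
        ereal (blockU blk i (gradf (xs k w) - transpose A *v (lams k w - \<beta> *\<^sub>R rs k w)) \<bullet> xs (Suc k) w)
          + g i (xs (Suc k) w)
          + ereal ((1/2) * ((xs (Suc k) w - xs k w) \<bullet> (P *v (xs (Suc k) w - xs k w))))
        \<le> ereal (blockU blk i (gradf (xs k w) - transpose A *v (lams k w - \<beta> *\<^sub>R rs k w)) \<bullet> z)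
          + g i z
          + ereal ((1/2) * ((z - xs k w) \<bullet> (P *v (z - xs k w))))" using upd_argmin w unfolding i_def by blast
      have am2': "\<forall>z. (\<forall>j. blk j \<noteq> idx k w' \<longrightarrow> z $ j = xs k w' $ j) \<longrightarrow>
        ereal (blockU blk (idx k w') (gradf (xs k w') - transpose A *v (lams k w' - \<beta> *\<^sub>R rs k w')) \<bullet> xs (Suc k) w')
          + g (idx k w') (xs (Suc k) w')
          + ereal ((1/2) * ((xs (Suc k) w' - xs k w') \<bullet> (P *v (xs (Suc k) w' - xs k w'))))
        \<le> ereal (blockU blk (idx k w') (gradf (xs k w') - transpose A *v (lams k w' - \<beta> *\<^sub>R rs k w')) \<bullet> z)
          + g (idx k w') z
          + ereal ((1/2) * ((z - xs k w') \<bullet> (P *v (z - xs k w'))))" using upd_argmin w' by blast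
      have am2: "\<forall>z. (\<forall>j. blk j \<noteq> i \<longrightarrow> z $ j = xs k w $ j) \<longrightarrow>
        ereal (blockU blk i (gradf (xs k w) - transpose A *v (lams k w - \<beta> *\<^sub>R rs k w)) \<bullet> xs (Suc k) w')
          + g i (xs (Suc k) w')
          + ereal ((1/2) * ((xs (Suc k) w' - xs k w) \<bullet> (P *v (xs (Suc k) w' - xs k w))))
        \<le> ereal (blockU blk i (gradf (xs k w) - transpose A *v (lams k w - \<beta> *\<^sub>R rs k w)) \<bullet> z)
          + g i z
          + ereal ((1/2) * ((z - xs k w) \<bullet> (P *v (z - xs k w))))"
        using am2' unfolding eq ik[symmetric] i_def[symmetric] .
      have gx: "g i x < \<infinity>" using x_fin i by (auto simp: less_top[symmetric])
      have Pb: "\<forall>v. v = blockU blk i v \<longrightarrow> L i * (norm v)\<^sup>2 + \<beta> * (norm (A *v v))\<^sup>2 \<le> v \<bullet> (P *v v)"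
        using P_bound i by blast
      have gb: "block_fun blk i (g i)" using g_block i by blast
      have gp: "proper_fun (g i)" using g_proper i by blast
      have gc: "convex_ereal (g i)" using g_convex i by blast
      have Lp: "L i > 0" using L_pos i by blast
      have x1: "xs (Suc k) w = xs (Suc k) w'"
        by (rule argmin_unique[OF gb gp gc P_psd Pb Lp beta_pos gx kp1 kp2 am1 am2])
      have r1a: "rs (Suc k) w = rs k w + A *v (xs (Suc k) w - xs k w)" using upd_r w by blast
      have r1b: "rs (Suc k) w' = rs k w' + A *v (xs (Suc k) w' - xs k w')" using upd_r w' by blast
      have r1: "rs (Suc k) w = rs (Suc k) w'" unfolding r1a r1b eq x1 ..
      have l1a: "lams (Suc k) w = lams k w - \<rho> *\<^sub>R rs (Suc k) w" using upd_lam w by blast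
      have l1b: "lams (Suc k) w' = lams k w' - \<rho> *\<^sub>R rs (Suc k) w'" using upd_lam w' by blast
      have l1: "lams (Suc k) w = lams (Suc k) w'" unfolding l1a l1b eq r1 ..
      show "xs (Suc k) w = xs (Suc k) w' \<and> rs (Suc k) w = rs (Suc k) w' \<and> lams (Suc k) w = lams (Suc k) w'"
        using x1 r1 l1 by simp
    qed
  qed
  have Mw_int: "integrable M (Mw k) \<and> (\<integral>w. Mw k w \<partial>M) = 0" for k
  proof -
    define rep where "rep p = (SOME w. w \<in> space M \<and> ipath idx k w = p)" for p
    have rep: "rep (ipath idx k w) \<in> space M \<and> ipath idx k (rep (ipath idx k w)) = ipath idx k w" if w: "w \<in> space M" for w
      unfolding rep_def by (rule someI_ex) (use w in blast)
    define Dp where "Dp p i = Dw k (rep p) i" for p i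
    have DwDp: "Dw k w i = Dp (ipath idx k w) i" if w: "w \<in> space M" for w i
    proof -
      have "xs k w = xs k (rep (ipath idx k w)) \<and> rs k w = rs k (rep (ipath idx k w)) \<and> lams k w = lams k (rep (ipath idx k w))"
        using uniq[of k] w rep[OF w] by metis
      thus ?thesis unfolding Dp_def Dw_def mu_def by simp
    qed
    define H where "H p = Dp (take k p) (p ! k) - (1 / real m) * (\<Sum>i<m. Dp (take k p) i)" for p
    have MH: "Mw k w = H (ipath idx (Suc k) w)" if w: "w \<in> space M" for w
      unfolding Mw_def H_def using DwDp[OF w] by (simp add: ipath_Suc nth_append)
    have int: "integrable M (\<lambda>w. H (ipath idx (Suc k) w))"
      by (rule integral_ipath(1)[OF idx_indep idx_unif idx_range])
    have II: "(\<integral>w. H (ipath idx (Suc k) w) \<partial>M) = (\<Sum>p\<in>Paths m (Suc k). H p * (1 / real m) ^ (Suc k))"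
      by (rule integral_ipath(2)[OF idx_indep idx_unif idx_range])
    have inner0: "(\<Sum>i<m. H (q @ [i])) = 0" if q: "q \<in> Paths m k" for q
    proof -
      have lq: "length q = k" using q by (simp add: Paths_def)
      have "(\<Sum>i<m. H (q @ [i])) = (\<Sum>i<m. Dp q i - (1 / real m) * (\<Sum>i<m. Dp q i))"
        unfolding H_def using lq by (intro sum.cong refl) (simp add: nth_append)
      also have "\<dots> = (\<Sum>i<m. Dp q i) - real m * ((1 / real m) * (\<Sum>i<m. Dp q i))"
        by (simp add: sum_subtractf)
      also have "\<dots> = 0" using mpos by simp
      finally show ?thesis .
    qed
    have "(\<Sum>p\<in>Paths m (Suc k). H p * (1 / real m) ^ (Suc k)) = (\<Sum>q\<in>Paths m k. \<Sum>i<m. H (q @ [i]) * (1 / real m) ^ (Suc k))"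
      by (rule sum_Paths_Suc)
    also have "\<dots> = (\<Sum>q\<in>Paths m k. (\<Sum>i<m. H (q @ [i])) * (1 / real m) ^ (Suc k))"
      by (intro sum.cong refl) (rule sum_distrib_right[symmetric])
    also have "\<dots> = 0" using inner0 by simp
    finally have II0: "(\<integral>w. H (ipath idx (Suc k) w) \<partial>M) = 0" using II by simp
    have "integrable M (Mw k) \<longleftrightarrow> integrable M (\<lambda>w. H (ipath idx (Suc k) w))"
      by (rule Bochner_Integration.integrable_cong) (simp_all add: MH)
    moreover have "(\<integral>w. Mw k w \<partial>M) = (\<integral>w. H (ipath idx (Suc k) w) \<partial>M)"
      by (rule Bochner_Integration.integral_cong) (simp_all add: MH)
    ultimately show ?thesis using int II0 by simp
  qed
  have Fx: "Fobj f g m x = ereal (Fr x)" using Fobj_fin x_fin by blast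
  have Tinv: "1 / (1 + real K / real m) = 1 / T" by (simp add: T_def)
  show ?thesis
  proof (cases "m \<noteq> 1 \<and> (\<exists>j<m. g j x0 = \<infinity>)")
    case True
    then obtain j where j: "j < m" "g j x0 = \<infinity>" and m2: "m \<noteq> 1" by blast
    have "(\<Sum>i<m. g i x0) = \<infinity>" using j by (auto simp: sum_Pinfty)
    hence Fx0: "Fobj f g m x0 = \<infinity>" by (simp add: Fobj_def)
    have apos: "a > 0" using m_pos m2 unfolding a_def by (simp add: field_simps)
    have inf: "ereal (1 - 1 / real m) * (Fobj f g m x0 - Fobj f g m x) = \<infinity>" using apos m2 unfolding a_def by (simp add: Fx0 Fx)
    have tp: "1 / (1 + real K / real m) > 0" using Tpos Tinv by simp
    have RHSinf: "ereal (1 / (1 + real K / real m)) * (ereal (1 - 1 / real m) * (Fobj f g m x0 - Fobj f g m x) + ereal r1 + ereal r2 + ereal r3) = \<infinity>" for r1 r2 r3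
      unfolding inf using tp by simp
    show ?thesis by (simp only: RHSinf) simp
  next
    case False
    hence FIN: "m = 1 \<or> (\<forall>j<m. g j x0 \<noteq> \<infinity>)" by blast
    have fin_iter: "\<forall>w\<in>space M. 1 \<le> k \<longrightarrow> (\<forall>j<m. \<bar>g j (xs k w)\<bar> \<noteq> \<infinity>)" for k
    proof (induction k)
      case 0 show ?case by simp
    next
      case (Suc k)
      show ?case
      proof (intro ballI impI allI)
        fix w j assume w: "w \<in> space M" and j: "j < m"
        show "\<bar>g j (xs (Suc k) w)\<bar> \<noteq> \<infinity>"
        proof (cases "j = idx k w")
          case True
          thus ?thesis using step[OF w, of k] gni j by auto
        next
          case False
          have "g j (xs (Suc k) w) = g j (xs k w)"
            using g_block j upd_keep w False unfolding block_fun_def by metis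
          moreover have "\<bar>g j (xs k w)\<bar> \<noteq> \<infinity>"
          proof (cases "k = 0")
            case True
            have "m \<noteq> 1" using False j idx_range w by auto
            hence "g j x0 \<noteq> \<infinity>" using FIN j by blast
            thus ?thesis using True init_x w gni j by auto
          next
            case False
            thus ?thesis using Suc.IH w j by auto
          qed
          ultimately show ?thesis by simp
        qed
      qed
    qed
    define C where "C = a * (Fr x0 - Fr x) + q (x - x0) / 2 + (\<beta>/2 - \<beta>/real m) * inner (A *v x0 - b) (A *v x0 - b)"
    define Z where "Z w = (1 / T) * (C + (norm (lam w))\<^sup>2 / (2 * real m * \<rho>) + (\<Sum>k\<le>K. Mw k w))" for w
    have Phi_le: "Phi f g m A b ((1 / (1 + real K / real m)) *\<^sub>R (xs (Suc K) w + (1 / real m) *\<^sub>R (\<Sum>k=1..K. xs k w))) x (lam w)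
        \<le> ereal (Z w)" if w: "w \<in> space M" for w
    proof -
      define xb where "xb = (1 / T) *\<^sub>R (xs (Suc K) w + (1 / real m) *\<^sub>R (\<Sum>k=1..K. xs k w))"
      define cw where "cw k = (if k = Suc K then 1 / T else 1 / (real m * T))" for k
      define S where "S = {1..Suc K}"
      have Sfin: "finite S" "S \<noteq> {}" by (auto simp: S_def)
      have xb_eq: "xb = (\<Sum>k\<in>S. cw k *\<^sub>R xs k w)"
      proof -
        have "(\<Sum>k\<in>S. cw k *\<^sub>R xs k w) = (\<Sum>k\<in>{1..K}. cw k *\<^sub>R xs k w) + cw (Suc K) *\<^sub>R xs (Suc K) w"
          by (simp add: S_def)
        also have "(\<Sum>k\<in>{1..K}. cw k *\<^sub>R xs k w) = (\<Sum>k\<in>{1..K}. (1 / (real m * T)) *\<^sub>R xs k w)"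
          by (intro sum.cong refl) (auto simp: cw_def)
        finally show ?thesis unfolding xb_def
          by (simp add: cw_def scaleR_sum_right[symmetric] algebra_simps)
      qed
      have cw_sum: "(\<Sum>k\<in>S. cw k) = 1"
      proof -
        have "(\<Sum>k\<in>S. cw k) = (\<Sum>k\<in>{1..K}. cw k) + cw (Suc K)" by (simp add: S_def)
        also have "(\<Sum>k\<in>{1..K}. cw k) = (\<Sum>k\<in>{1..K}. 1 / (real m * T))"
          by (intro sum.cong refl) (auto simp: cw_def)
        also have "\<dots> + cw (Suc K) = (real K / real m + 1) / T" using mpos Tpos by (simp add: cw_def field_simps)
        also have "\<dots> = 1" using Tpos by (simp add: T_def)
        finally show ?thesis .
      qed
      have cw_nn: "\<And>k. k \<in> S \<Longrightarrow> cw k \<ge> 0" using Tpos mpos by (simp add: cw_def)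
      have finS: "\<forall>j<m. \<bar>g j (xs k w)\<bar> \<noteq> \<infinity>" if "k \<in> S" for k
        using fin_iter[of k] w that by (auto simp: S_def)
      have f_j: "f xb \<le> (\<Sum>k\<in>S. cw k * f (xs k w))"
        unfolding xb_eq by (rule convex_on_sum[OF Sfin f_convex cw_sum]) (simp_all add: cw_nn)
      have g_j: "gr j xb \<le> (\<Sum>k\<in>S. cw k * gr j (xs k w)) \<and> \<bar>g j xb\<bar> \<noteq> \<infinity>" if j: "j < m" for j
      proof -
        have gc: "convex_ereal (g j)" using g_convex j by blast
        have gn: "\<forall>v. -\<infinity> < g j v" using gni j by blast
        have inC: "xs k w \<in> {v. g j v < \<infinity>}" if k: "k \<in> S" for k
        proof -
          have "\<bar>g j (xs k w)\<bar> \<noteq> \<infinity>" using finS[OF k] j by simp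
          thus ?thesis by (cases "g j (xs k w)") auto
        qed
        have "xb \<in> {v. g j v < \<infinity>}"
          unfolding xb_eq by (rule convex_sum[OF Sfin(1) convex_ereal_domain(1)[OF gc gn] cw_sum cw_nn inC])
        moreover have "gr j xb \<le> (\<Sum>k\<in>S. cw k * gr j (xs k w))"
          unfolding xb_eq gr_def by (rule convex_on_sum[OF Sfin convex_ereal_domain(2)[OF gc gn] cw_sum cw_nn inC])
        moreover have "-\<infinity> < g j xb" by (rule gn[rule_format])
        ultimately show ?thesis by (cases "g j xb") auto
      qed
      have xbfin: "\<forall>j<m. \<bar>g j xb\<bar> \<noteq> \<infinity>"
      proof (intro allI impI)
        fix j assume "j < m"
        from g_j[OF this] show "\<bar>g j xb\<bar> \<noteq> \<infinity>" by (rule conjunct2)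
      qed
      have Fr_xb: "Fr xb \<le> (\<Sum>k\<in>S. cw k * Fr (xs k w))"
      proof -
        have "(\<Sum>j<m. gr j xb) \<le> (\<Sum>j<m. \<Sum>k\<in>S. cw k * gr j (xs k w))"
        proof (rule sum_mono)
          fix j assume "j \<in> {..<m}"
          hence "j < m" by simp
          from g_j[OF this] show "gr j xb \<le> (\<Sum>k\<in>S. cw k * gr j (xs k w))" by (rule conjunct1)
        qed
        also have "\<dots> = (\<Sum>k\<in>S. cw k * (\<Sum>j<m. gr j (xs k w)))"
          by (subst sum.swap) (simp add: sum_distrib_left)
        finally have "Fr xb \<le> (\<Sum>k\<in>S. cw k * f (xs k w)) + (\<Sum>k\<in>S. cw k * (\<Sum>j<m. gr j (xs k w)))"
          using f_j unfolding Fr_def by linarith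
        also have "\<dots> = (\<Sum>k\<in>S. cw k * Fr (xs k w))" by (simp add: Fr_def sum.distrib distrib_left)
        finally show ?thesis .
      qed
      have split: "(\<Sum>k\<in>S. cw k * G k) = (1 / (real m * T)) * (\<Sum>k\<in>{1..K}. G k) + (1 / T) * G (Suc K)" for G :: "nat \<Rightarrow> real"
      proof -
        have "(\<Sum>k\<in>S. cw k * G k) = (\<Sum>k\<in>{1..K}. cw k * G k) + cw (Suc K) * G (Suc K)"
          by (simp add: S_def)
        also have "(\<Sum>k\<in>{1..K}. cw k * G k) = (\<Sum>k\<in>{1..K}. (1 / (real m * T)) * G k)"
          by (intro sum.cong refl) (simp add: cw_def)
        also have "\<dots> = (1 / (real m * T)) * (\<Sum>k\<in>{1..K}. G k)" by (rule sum_distrib_left[symmetric])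
        also have "cw (Suc K) = 1 / T" by (simp add: cw_def)
        finally show ?thesis .
      qed
      have FrT: "T * (Fr xb - Fr x) \<le> (Fr (xs (Suc K) w) - Fr x) + (1 / real m) * (\<Sum>k\<in>{1..K}. Fr (xs k w) - Fr x)"
      proof -
        have "Fr xb - Fr x \<le> (\<Sum>k\<in>S. cw k * Fr (xs k w)) - (\<Sum>k\<in>S. cw k) * Fr x" using Fr_xb cw_sum by simp
        also have "\<dots> = (\<Sum>k\<in>S. cw k * (Fr (xs k w) - Fr x))"
        proof -
          have "(\<Sum>k\<in>S. cw k * (Fr (xs k w) - Fr x)) = (\<Sum>k\<in>S. cw k * Fr (xs k w) - cw k * Fr x)"
            by (simp only: right_diff_distrib)
          also have "\<dots> = (\<Sum>k\<in>S. cw k * Fr (xs k w)) - (\<Sum>k\<in>S. cw k * Fr x)" by (rule sum_subtractf)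
          also have "(\<Sum>k\<in>S. cw k * Fr x) = (\<Sum>k\<in>S. cw k) * Fr x" by (rule sum_distrib_right[symmetric])
          finally show ?thesis by simp
        qed
        also have "\<dots> = (1 / (real m * T)) * (\<Sum>k\<in>{1..K}. Fr (xs k w) - Fr x) + (1 / T) * (Fr (xs (Suc K) w) - Fr x)"
          by (rule split)
        finally have le: "Fr xb - Fr x \<le> (1 / (real m * T)) * (\<Sum>k\<in>{1..K}. Fr (xs k w) - Fr x) + (1 / T) * (Fr (xs (Suc K) w) - Fr x)" .
        have e1: "T * (1 / (real m * T)) = 1 / real m" using Tpos by simp
        have e2: "T * (1 / T) = 1" using Tpos by simp
        have "T * (Fr xb - Fr x) \<le> T * ((1 / (real m * T)) * (\<Sum>k\<in>{1..K}. Fr (xs k w) - Fr x) + (1 / T) * (Fr (xs (Suc K) w) - Fr x))"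
          using le Tpos by (rule mult_left_mono[OF _ less_imp_le])
        also have "\<dots> = (T * (1 / (real m * T))) * (\<Sum>k\<in>{1..K}. Fr (xs k w) - Fr x) + (T * (1 / T)) * (Fr (xs (Suc K) w) - Fr x)"
          by (simp only: distrib_left mult.assoc)
        also have "\<dots> = (Fr (xs (Suc K) w) - Fr x) + (1 / real m) * (\<Sum>k\<in>{1..K}. Fr (xs k w) - Fr x)"
          unfolding e1 e2 by simp
        finally show ?thesis .
      qed
      have Axb: "A *v xb - b = (1 / T) *\<^sub>R (rs (Suc K) w + (1 / real m) *\<^sub>R (\<Sum>j\<in>{1..K}. rs j w))"
      proof -
        have rsum: "(\<Sum>j\<in>{1..K}. rs j w) = A *v (\<Sum>k=1..K. xs k w) - real K *\<^sub>R b"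
        proof -
          have "(\<Sum>j\<in>{1..K}. rs j w) = (\<Sum>j\<in>{1..K}. A *v xs j w - b)"
            using rs_eq w by (intro sum.cong refl) auto
          also have "\<dots> = (\<Sum>j\<in>{1..K}. A *v xs j w) - (\<Sum>j\<in>{1..K}. b)" by (rule sum_subtractf)
          also have "(\<Sum>j\<in>{1..K}. A *v xs j w) = A *v (\<Sum>k=1..K. xs k w)" by (rule mv_sum[symmetric])
          also have "(\<Sum>j\<in>{1..K}. b) = real K *\<^sub>R b" by (subst sum_constant_scaleR) simp
          finally show ?thesis .
        qed
        define Y where "Y = xs (Suc K) w + (1 / real m) *\<^sub>R (\<Sum>k=1..K. xs k w)"
        have e0: "T *\<^sub>R (A *v xb - b) = A *v (T *\<^sub>R xb) - T *\<^sub>R b"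
          by (simp add: matrix_vector_mult_scaleR scaleR_diff_right)
        have e1: "T *\<^sub>R xb = Y" using Tpos by (simp add: xb_def Y_def)
        have e2: "T *\<^sub>R b = b + (real K / real m) *\<^sub>R b" by (simp add: T_def scaleR_left_distrib)
        have e3: "A *v Y = A *v xs (Suc K) w + (1 / real m) *\<^sub>R (A *v (\<Sum>k=1..K. xs k w))"
          by (simp add: Y_def matrix_vector_right_distrib matrix_vector_mult_scaleR)
        have rsK: "rs (Suc K) w = A *v xs (Suc K) w - b" using rs_eq w by blast
        have e4: "(1 / real m) *\<^sub>R (real K *\<^sub>R b) = (real K / real m) *\<^sub>R b" by simp
        have e5: "(1 / real m) *\<^sub>R (A *v (\<Sum>k=1..K. xs k w) - real K *\<^sub>R b)
            = (1 / real m) *\<^sub>R (A *v (\<Sum>k=1..K. xs k w)) - (real K / real m) *\<^sub>R b"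
          by (simp add: scaleR_diff_right)
        have "T *\<^sub>R (A *v xb - b) = A *v Y - T *\<^sub>R b" using e0 e1 by simp
        also have "\<dots> = (A *v xs (Suc K) w + (1 / real m) *\<^sub>R (A *v (\<Sum>k=1..K. xs k w))) - (b + (real K / real m) *\<^sub>R b)"
          unfolding e3 e2 ..
        also have "\<dots> = rs (Suc K) w + (1 / real m) *\<^sub>R (\<Sum>j\<in>{1..K}. rs j w)"
          unfolding rsum rsK e5 by (simp add: algebra_simps)
        finally have "T *\<^sub>R (A *v xb - b) = rs (Suc K) w + (1 / real m) *\<^sub>R (\<Sum>j\<in>{1..K}. rs j w)" .
        hence "(1 / T) *\<^sub>R (T *\<^sub>R (A *v xb - b)) = (1 / T) *\<^sub>R (rs (Suc K) w + (1 / real m) *\<^sub>R (\<Sum>j\<in>{1..K}. rs j w))" by simp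
        thus ?thesis using Tpos by simp
      qed
      have pb: "T * (Fr xb - Fr x - lam w \<bullet> (A *v xb - b)) \<le> T * Z w"
      proof -
        have "T * (Fr xb - Fr x - lam w \<bullet> (A *v xb - b)) = T * (Fr xb - Fr x) - lam w \<bullet> (rs (Suc K) w + (1 / real m) *\<^sub>R (\<Sum>j\<in>{1..K}. rs j w))"
          unfolding Axb using Tpos by (simp add: algebra_simps)
        also have "\<dots> \<le> (Fr (xs (Suc K) w) - Fr x) + (1 / real m) * (\<Sum>k\<in>{1..K}. Fr (xs k w) - Fr x)
            - lam w \<bullet> (rs (Suc K) w + (1 / real m) *\<^sub>R (\<Sum>j\<in>{1..K}. rs j w))" using FrT by simp
        also have "\<dots> \<le> a * (Fr x0 - Fr x) + q (x - x0) / 2 + (\<beta>/2 - \<beta>/real m) * inner (rs 0 w) (rs 0 w)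
            + inner (lam w) (lam w) / (2 * real m * \<rho>) + (\<Sum>k\<le>K. Mw k w)" by (rule path_bound[OF w])
        also have "\<dots> = T * Z w" using Tpos init_r w
          by (simp add: Z_def C_def power2_norm_eq_inner)
        finally show ?thesis .
      qed
      have pb2: "Fr xb - Fr x - lam w \<bullet> (A *v xb - b) \<le> Z w" using pb Tpos by simp
      have "Phi f g m A b xb x (lam w) = ereal (Fr xb - Fr x - lam w \<bullet> (A *v xb - b))"
        unfolding Phi_def Fobj_fin[OF xbfin] Fx by simp
      also have "\<dots> \<le> ereal (Z w)" using pb2 by simp
      finally show ?thesis unfolding xb_def Tinv .
    qed
    have MI: "integrable M (Mw k)" "(\<integral>w. Mw k w \<partial>M) = 0" for k using Mw_int[of k] by auto
    define N where "N = (\<integral>w. (norm (lam w))\<^sup>2 \<partial>M)"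
    have int1: "integrable M (\<lambda>w. C + (norm (lam w))\<^sup>2 / (2 * real m * \<rho>))"
      using lam_sq by (intro Bochner_Integration.integrable_add integrable_const integrable_divide) auto
    have int2: "integrable M (\<lambda>w. \<Sum>k\<le>K. Mw k w)"
      by (intro Bochner_Integration.integrable_sum) (use MI in auto)
    have int3: "integrable M (\<lambda>w. C + (norm (lam w))\<^sup>2 / (2 * real m * \<rho>) + (\<Sum>k\<le>K. Mw k w))"
      using int1 int2 by (rule Bochner_Integration.integrable_add)
    have Zint: "integrable M Z" unfolding Z_def using int3 by (rule integrable_mult_right)
    have IZ: "(\<integral>w. Z w \<partial>M) = (1 / T) * (C + N / (2 * real m * \<rho>))"
    proof -
      have "(\<integral>w. Z w \<partial>M) = (1 / T) * (\<integral>w. C + (norm (lam w))\<^sup>2 / (2 * real m * \<rho>) + (\<Sum>k\<le>K. Mw k w) \<partial>M)"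
        unfolding Z_def by (rule integral_mult_right_zero)
      also have "(\<integral>w. C + (norm (lam w))\<^sup>2 / (2 * real m * \<rho>) + (\<Sum>k\<le>K. Mw k w) \<partial>M)
          = (\<integral>w. C + (norm (lam w))\<^sup>2 / (2 * real m * \<rho>) \<partial>M) + (\<integral>w. (\<Sum>k\<le>K. Mw k w) \<partial>M)"
        using int1 int2 by (rule Bochner_Integration.integral_add)
      also have "(\<integral>w. (\<Sum>k\<le>K. Mw k w) \<partial>M) = 0"
        using MI by (subst Bochner_Integration.integral_sum) auto
      also have "(\<integral>w. C + (norm (lam w))\<^sup>2 / (2 * real m * \<rho>) \<partial>M) = C + N / (2 * real m * \<rho>)"
        using lam_sq unfolding N_def
        by (subst Bochner_Integration.integral_add) (auto simp: prob_space)
      finally show ?thesis by simp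
    qed
    have E: "eexpectation M (\<lambda>w. Phi f g m A b ((1 / (1 + real K / real m)) *\<^sub>R (xs (Suc K) w + (1 / real m) *\<^sub>R (\<Sum>k=1..K. xs k w))) x (lam w))
        \<le> ereal (\<integral>w. Z w \<partial>M)"
      by (rule eexp_le) (use Phi_le Zint in auto)
    have aF: "ereal (1 - 1 / real m) * (Fobj f g m x0 - Fobj f g m x) = ereal (a * (Fr x0 - Fr x))"
    proof (cases "m = 1")
      case True thus ?thesis by (simp add: a_def zero_ereal_def[symmetric])
    next
      case False
      hence "\<forall>j<m. g j x0 \<noteq> \<infinity>" using FIN by blast
      hence "\<forall>j<m. \<bar>g j x0\<bar> \<noteq> \<infinity>"
      proof (intro allI impI)
        fix j assume j: "j < m" and h: "\<forall>j<m. g j x0 \<noteq> \<infinity>"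
        have "g j x0 \<noteq> \<infinity>" using h j by simp
        moreover have "-\<infinity> < g j x0" using gni j by simp
        ultimately show "\<bar>g j x0\<bar> \<noteq> \<infinity>" by (cases "g j x0") auto
      qed
      hence "Fobj f g m x0 = ereal (Fr x0)" by (rule Fobj_fin)
      thus ?thesis by (simp add: Fx a_def)
    qed
    have qsym: "q (x - x0) = (x0 - x) \<bullet> (P *v (x0 - x))"
    proof -
      have neg: "P *v (- v) = - (P *v v)" for v :: "real^'n"
        by (simp add: vec_eq_iff matrix_vector_mult_def sum_negf)
      have "x - x0 = - (x0 - x)" by simp
      thus ?thesis unfolding q_def by (simp only: neg inner_minus_left inner_minus_right minus_minus)
    qed
    have nrm: "inner (A *v x0 - b) (A *v x0 - b) = (norm (A *v x0 - b))\<^sup>2" by (simp add: power2_norm_eq_inner)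
    have RHS: "ereal (1 / (1 + real K / real m)) *
       ( ereal (1 - 1 / real m) * (Fobj f g m x0 - Fobj f g m x)
         + ereal ((1/2) * ((x0 - x) \<bullet> (P *v (x0 - x))))
         + ereal ((\<beta> / 2 - \<beta> / real m) * (norm (A *v x0 - b))\<^sup>2)
         + ereal (1 / (2 * real m * \<rho>) * (\<integral>w. (norm (lam w))\<^sup>2 \<partial>M)))
       = ereal (\<integral>w. Z w \<partial>M)"
      unfolding aF IZ Tinv C_def qsym nrm N_def by simp
    show ?thesis using E RHS by simp
  qed
qed



end
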